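(* Let $\psi:\mathbb{R}\to\mathbb{R}$ be any continuous $1$-periodic function, and let $\varepsilon>0$, $0<\alpha<1$ satisfy $(\pi^2\varepsilon^2+1)\alpha\ge 1$. Then every minimizer of $E$ over $\mathcal{A}$ is a graph curve.
   Context: Let $\Omega=\{(x,y)\in\mathbb{R}^2: y>\psi(x)\}$, $\overline{\Omega}=\{y\ge\psi(x)\}$, $\partial\Omega=\{y=\psi(x)\}$, $I=(0,1)$. The admissible set $\mathcal{A}$ consists of all $\gamma=(x,y)\in H^2(I;\mathbb{R}^2)$ (hence $C^1$ on $\bar I$) with $|\dot\gamma(t)|>0$ and $\gamma(t)\in\overline{\Omega}$ for all $t\in\bar I$, and $x(0)=0$, $x(1)=1$, $y(0)=y(1)$, $\dot\gamma(0)=\dot\gamma(1)$. For $\gamma\in\mathcal{A}$ let $L_\gamma=\int_I|\dot\gamma|\,dt$ and, with arc length $s$, $E[\gamma]=\int_0^{L_\gamma}[\varepsilon^2|\gamma_{ss}(s)|^2+\Theta(\gamma(s))]\,ds$, where $\Theta\equiv1$ on $\Omega$ and $\Theta\equiv\alpha$ on $\partial\Omega$. A minimizer is a $\gamma\in\mathcal{A}$ with $E[\gamma]=\inf_{\mathcal{A}}E$. A curve $\gamma=(x,y)\in\mathcal{A}$ is a graph curve if $x'(t)>0$ for all $t\in\bar I$. *)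

theory Defs
  imports "HOL-Analysis.Analysis"
begin

text \<open>A planar curve on I = (0,1) is given by its two components x, y :: real => real;
  only their values on [0,1] matter.\<close>

definition d1 :: "(real \<Rightarrow> real) \<Rightarrow> real \<Rightarrow> real" where
  "d1 f t = vector_derivative f (at t within {0..1})"

definition d2 :: "(real \<Rightarrow> real) \<Rightarrow> real \<Rightarrow> real" where
  "d2 f = d1 (d1 f)"

definition H2_01 :: "(real \<Rightarrow> real) \<Rightarrow> bool" where
  "H2_01 f \<longleftrightarrow> (\<exists>f' g.
      continuous_on {0..1} f' \<and>
      (\<forall>t\<in>{0..1}. (f has_vector_derivative f' t) (at t within {0..1})) \<and>
      set_integrable lborel {0..1} g \<and>
      set_integrable lborel {0..1} (\<lambda>t. (g t)\<^sup>2) \<and>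
      (\<forall>t\<in>{0..1}. f' t = f' 0 + (LBINT s=0..t. g s)))"

text \<open>Theta: 1 on Omega = {y > psi x}, alpha on the boundary {y = psi x}
  (outside the closure the value is irrelevant; we put 1).\<close>
definition Theta :: "(real \<Rightarrow> real) \<Rightarrow> real \<Rightarrow> real \<times> real \<Rightarrow> real" where
  "Theta psi \<alpha> p = (if snd p = psi (fst p) then \<alpha> else 1)"

definition speed :: "(real \<Rightarrow> real) \<Rightarrow> (real \<Rightarrow> real) \<Rightarrow> real \<Rightarrow> real" where
  "speed x y t = sqrt ((d1 x t)\<^sup>2 + (d1 y t)\<^sup>2)"

definition admissible :: "(real \<Rightarrow> real) \<Rightarrow> (real \<Rightarrow> real) \<Rightarrow> (real \<Rightarrow> real) \<Rightarrow> bool" where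
  "admissible psi x y \<longleftrightarrow>
     H2_01 x \<and> H2_01 y \<and>
     (\<forall>t\<in>{0..1}. speed x y t > 0) \<and>
     (\<forall>t\<in>{0..1}. y t \<ge> psi (x t)) \<and>
     x 0 = 0 \<and> x 1 = 1 \<and> y 0 = y 1 \<and>
     d1 x 0 = d1 x 1 \<and> d1 y 0 = d1 y 1"

text \<open>The energy E = int_0^L (eps^2 |gamma_ss|^2 + Theta(gamma)) ds, written in the
  original parameter t via ds = |gamma'| dt and
  |gamma_ss|^2 = (x' y'' - x'' y')^2 / |gamma'|^6.\<close>
definition energy :: "real \<Rightarrow> real \<Rightarrow> (real \<Rightarrow> real) \<Rightarrow> (real \<Rightarrow> real) \<Rightarrow> (real \<Rightarrow> real) \<Rightarrow> real" where
  "energy \<epsilon> \<alpha> psi x y =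
     set_lebesgue_integral lebesgue {0..1}
       (\<lambda>t. \<epsilon>\<^sup>2 * (d1 x t * d2 y t - d2 x t * d1 y t)\<^sup>2 / (speed x y t) ^ 5
            + Theta psi \<alpha> (x t, y t) * speed x y t)"

definition minimizer :: "real \<Rightarrow> real \<Rightarrow> (real \<Rightarrow> real) \<Rightarrow> (real \<Rightarrow> real) \<Rightarrow> (real \<Rightarrow> real) \<Rightarrow> bool" where
  "minimizer \<epsilon> \<alpha> psi x y \<longleftrightarrow>
     admissible psi x y \<and>
     energy \<epsilon> \<alpha> psi x y = (INF c \<in> {(u, v). admissible psi u v}. energy \<epsilon> \<alpha> psi (fst c) (snd c))"

definition graph_curve :: "(real \<Rightarrow> real) \<Rightarrow> (real \<Rightarrow> real) \<Rightarrow> bool" where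
  "graph_curve x y \<longleftrightarrow> (\<forall>t\<in>{0..1}. d1 x t > 0)"

end

theory Submission
  imports Defs
begin

lemma small_open_integral:
  fixes \<phi> :: "real \<Rightarrow> real"
  assumes \<phi>: "\<phi> absolutely_integrable_on {0..1}" and nn: "\<And>t. 0 \<le> \<phi> t"
    and A: "A \<in> sets lebesgue" "A \<subseteq> {0..1}" and zero: "\<And>t. t \<in> A \<Longrightarrow> \<phi> t = 0"
    and "\<epsilon> > 0"
  shows "\<exists>V. open V \<and> A \<subseteq> V \<and> integral (V \<inter> {0..1}) \<phi> < \<epsilon>"
proof -
  have "\<forall>n::nat. \<exists>V. open V \<and> A \<subseteq> V \<and> (V - A) \<in> lmeasurable \<and> measure lebesgue (V - A) < 1 / Suc n"
  proof
    fix n :: nat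
    obtain V where V: "open V" "A \<subseteq> V" "(V - A) \<in> lmeasurable" "emeasure lebesgue (V - A) < ennreal (1 / Suc n)"
      using sets_lebesgue_outer_open[OF A(1), of "1 / Suc n"] by auto
    have "measure lebesgue (V - A) < 1 / Suc n"
      using V(3,4) by (simp add: emeasure_eq_measure2 ennreal_less_iff)
    then show "\<exists>V. open V \<and> A \<subseteq> V \<and> (V - A) \<in> lmeasurable \<and> measure lebesgue (V - A) < 1 / Suc n"
      using V by blast
  qed
  then obtain V where V: "\<And>n. open (V n)" "\<And>n. A \<subseteq> V n" "\<And>n. (V n - A) \<in> lmeasurable"
     "\<And>n. measure lebesgue (V n - A) < 1 / Suc n"
    by metis
  define W where "W n = (\<Inter>k\<in>{..n}. V k)" for n
  have Wo: "open (W n)" for n unfolding W_def using V(1) by auto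
  have WA: "A \<subseteq> W n" for n unfolding W_def using V(2) by auto
  have Wdec: "W (Suc n) \<subseteq> W n" for n unfolding W_def by auto
  have WV: "W n \<subseteq> V n" for n unfolding W_def by auto
  define f where "f k t = indicator (W k) t * \<phi> t" for k t
  define h where "h t = indicator (\<Inter>k. W k) t * \<phi> t" for t
  have fint: "f k absolutely_integrable_on {0..1}" for k
  proof -
    have "\<phi> absolutely_integrable_on (W k \<inter> {0..1})"
      by (rule set_integrable_subset[OF \<phi>]) (use Wo in simp_all)
    then have "(\<lambda>t. indicator (W k) t * \<phi> t) absolutely_integrable_on {0..1}"
      by (simp add: set_integrable_def indicator_inter_arith mult.assoc mult.left_commute)
    then show ?thesis unfolding f_def .
  qed
  have eqI: "integral (W k \<inter> {0..1}) \<phi> = integral {0..1} (f k)" for k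
  proof -
    have "(\<lambda>t. indicator (W k) t * \<phi> t) = (\<lambda>x. if x \<in> W k then \<phi> x else 0)"
      by (auto simp: indicator_def fun_eq_iff)
    then show ?thesis unfolding f_def by (simp add: integral_restrict_Int[symmetric] Int_commute)
  qed
  have "h integrable_on {0..1} \<and> (\<lambda>k. integral {0..1} (f k)) \<longlonglongrightarrow> integral {0..1} h"
  proof (rule monotone_convergence_decreasing)
    show "f k integrable_on {0..1}" for k using fint set_lebesgue_integral_eq_integral(1) by blast
    show "f (Suc k) x \<le> f k x" if "x \<in> {0..1}" for k x
      using Wdec[of k] nn[of x] by (auto simp: f_def indicator_def)
    show "(\<lambda>k. f k x) \<longlonglongrightarrow> h x" if "x \<in> {0..1}" for x
    proof (cases "x \<in> (\<Inter>k. W k)")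
      case True then show ?thesis by (simp add: f_def h_def)
    next
      case False
      then obtain k0 where "x \<notin> W k0" by auto
      then have "\<forall>k\<ge>k0. x \<notin> W k"
        using Wdec by (metis lift_Suc_antimono_le subsetD)
      then have "eventually (\<lambda>k. f k x = h x) sequentially"
        using False unfolding eventually_sequentially f_def h_def by (intro exI[of _ k0]) auto
      then show ?thesis by (rule tendsto_eventually)
    qed
    have "0 \<le> integral {0..1} (f k) \<and> integral {0..1} (f k) \<le> integral {0..1} \<phi>" for k
    proof
      show "0 \<le> integral {0..1} (f k)"
        by (rule integral_nonneg) (use \<open>\<And>k. f k integrable_on {0..1}\<close> nn in \<open>auto simp: f_def\<close>)
      show "integral {0..1} (f k) \<le> integral {0..1} \<phi>"
        by (rule integral_le) (use \<open>\<And>k. f k integrable_on {0..1}\<close> \<phi> nn in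
          \<open>auto simp: f_def indicator_def set_lebesgue_integral_eq_integral(1)\<close>)
    qed
    then show "bounded (range (\<lambda>k. integral {0..1} (f k)))"
      by (intro boundedI[where B="integral {0..1} \<phi>"]) auto
  qed
  then have lim: "(\<lambda>k. integral {0..1} (f k)) \<longlonglongrightarrow> integral {0..1} h" by blast
  have negN: "negligible ((\<Inter>k. W k) - A)"
  proof (subst negligible_outer_le, intro allI impI)
    fix e :: real assume "e > 0"
    then obtain n :: nat where n: "1 / Suc n < e"
      using reals_Archimedean[OF \<open>e > 0\<close>] by (auto simp: inverse_eq_divide)
    show "\<exists>T. (\<Inter>k. W k) - A \<subseteq> T \<and> T \<in> lmeasurable \<and> measure lebesgue T \<le> e"
      using V(3,4)[of n] n WV[of n] by (intro exI[of _ "V n - A"]) auto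
  qed
  have "\<forall>x\<in>{0..1} - ((\<Inter>k. W k) - A). h x = 0"
    by (auto simp: h_def zero indicator_def)
  then have "integral {0..1} h = integral {0..1} (\<lambda>t. 0::real)"
    using integral_spike[OF negN, of "{0..1}" "\<lambda>t. 0::real" h] by simp
  then have "integral {0..1} h = 0" by simp
  then have "eventually (\<lambda>k. integral {0..1} (f k) < \<epsilon>) sequentially"
    using order_tendstoD(2)[OF lim, of \<epsilon>] \<open>\<epsilon> > 0\<close> by simp
  then obtain k where "integral {0..1} (f k) < \<epsilon>"
    unfolding eventually_sequentially by blast
  then show ?thesis using Wo[of k] WA[of k] eqI[of k] by auto
qed

lemma Epq_negligible:
  fixes g :: "real \<Rightarrow> real" and p q :: real
  assumes g: "g absolutely_integrable_on {0..1}" and pq: "p < q"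
  shows "negligible {t \<in> {0..1}. g t < p \<and> (\<forall>d>0. \<exists>a b. a \<le> t \<and> t \<le> b \<and> a < b \<and> b - a < d \<and> 0 \<le> a \<and> b \<le> 1 \<and> q * (b - a) < integral {a..b} g)}"
    (is "negligible ?E")
proof (subst negligible_outer_le, intro allI impI)
  fix e :: real assume "e > 0"
  define \<phi> where "\<phi> t = max 0 (g t - p)" for t
  have gp: "(\<lambda>t. g t - p) absolutely_integrable_on {0..1}"
    by (intro set_integral_diff(1) g absolutely_integrable_on_const) auto
  have \<phi>int: "\<phi> absolutely_integrable_on {0..1}"
    unfolding \<phi>_def by (intro absolutely_integrable_max_1 gp absolutely_integrable_on_const) auto
  have \<phi>nn: "\<And>t. 0 \<le> \<phi> t" by (simp add: \<phi>_def)
  define A where "A = {0..1} \<inter> {t. indicator {0..1} t * g t \<in> {..<p}}"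
  have "(\<lambda>t. indicator {0..1} t * g t) \<in> borel_measurable lebesgue"
    using g unfolding set_integrable_def by (auto dest: borel_measurable_integrable)
  then have Ameas: "A \<in> sets lebesgue"
    unfolding A_def by (intro sets.Int lebesgue_measurable_vimage_borel) auto
  have AE: "?E \<subseteq> A" by (auto simp: A_def)
  have Azero: "\<phi> t = 0" if "t \<in> A" for t using that by (auto simp: A_def \<phi>_def)
  obtain V where V: "open V" "A \<subseteq> V" and Vsmall: "integral (V \<inter> {0..1}) \<phi> < e * (q - p)"
  proof -
    have "A \<subseteq> {0..1}" by (auto simp: A_def)
    have "e * (q - p) > 0" using pq \<open>e > 0\<close> by simp
    from small_open_integral[OF \<phi>int \<phi>nn Ameas \<open>A \<subseteq> {0..1}\<close> Azero this] that show ?thesis by blast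
  qed
  define K where "K = {(c, r). 0 < r \<and> {c - r..c + r} \<subseteq> V \<inter> {0..1} \<and> q * (2 * r) < integral {c - r..c + r} g}"
  obtain C where C: "countable C" "C \<subseteq> K"
     and Cdisj: "pairwise (\<lambda>i j. disjnt (cball (fst i) (snd i)) (cball (fst j) (snd j))) C"
     and Cneg: "negligible (?E - (\<Union>i\<in>C. cball (fst i) (snd i)))"
  proof (rule Vitali_covering_theorem_cballs[of K snd ?E fst])
    show "0 < snd i" if "i \<in> K" for i using that by (auto simp: K_def)
    fix t d :: real assume t: "t \<in> ?E" and "0 < d"
    then have "t \<in> V" using AE V by auto
    then obtain \<rho> where "\<rho> > 0" and \<rho>: "ball t \<rho> \<subseteq> V"
      using V(1) open_contains_ball by blast
    obtain a b where ab: "a \<le> t" "t \<le> b" "a < b" "b - a < min d \<rho>" "0 \<le> a" "b \<le> 1"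
        "q * (b - a) < integral {a..b} g"
      using t \<open>0 < d\<close> \<open>\<rho> > 0\<close> by (auto dest!: spec[of _ "min d \<rho>"])
    have "{a..b} \<subseteq> ball t \<rho>" using ab by (auto simp: dist_real_def)
    then have sub: "{a..b} \<subseteq> V \<inter> {0..1}" using \<rho> ab by auto
    have e1: "(a + b) / 2 - (b - a) / 2 = a" "(a + b) / 2 + (b - a) / 2 = b" by (auto simp: field_simps)
    show "\<exists>i. i \<in> K \<and> t \<in> cball (fst i) (snd i) \<and> snd i < d"
    proof (intro exI[of _ "((a + b) / 2, (b - a) / 2)"] conjI)
      show "((a + b) / 2, (b - a) / 2) \<in> K"
      proof -
        have ee: "{(a+b)/2 - (b-a)/2 .. (a+b)/2 + (b-a)/2} = {a..b}" "2 * ((b-a)/2) = b - a"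
          by (auto simp: field_simps)
        show ?thesis unfolding K_def mem_Collect_eq prod.case ee using ab sub by simp
      qed
      show "t \<in> cball (fst ((a + b) / 2, (b - a) / 2)) (snd ((a + b) / 2, (b - a) / 2))"
        using ab by (simp add: cball_eq_atLeastAtMost e1)
      show "snd ((a + b) / 2, (b - a) / 2) < d" using ab by simp
    qed
  qed
  have \<phi>on: "\<phi> integrable_on S" if "S \<in> sets lebesgue" "S \<subseteq> {0..1}" for S
    using set_integrable_subset[OF \<phi>int that] set_lebesgue_integral_eq_integral(1) by blast
  have ginterval: "g integrable_on {a..b}" if "{a..b} \<subseteq> {0..1}" for a b
    using integrable_on_subinterval[OF set_lebesgue_integral_eq_integral(1)[OF g] that] .
  have bound: "measure lebesgue (\<Union>i\<in>F. cball (fst i) (snd i)) \<le> e" if F: "F \<subseteq> C" "finite F" for F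
  proof -
    have FK: "\<And>i. i \<in> F \<Longrightarrow> i \<in> K" using F C by auto
    let ?J = "\<lambda>i. {fst i - snd i..fst i + snd i}"
    have cb: "cball (fst i) (snd i) = ?J i" for i by (simp add: cball_eq_atLeastAtMost)
    have Jsub: "?J i \<subseteq> V \<inter> {0..1}" if "i \<in> F" for i using FK[OF that] by (auto simp: K_def)
    have Jpos: "0 < snd i" if "i \<in> F" for i using FK[OF that] by (auto simp: K_def)
    have Jint: "q * (2 * snd i) < integral (?J i) g" if "i \<in> F" for i using FK[OF that] by (auto simp: K_def)
    have m1: "measure lebesgue (\<Union>i\<in>F. cball (fst i) (snd i)) \<le> (\<Sum>i\<in>F. measure lebesgue (cball (fst i) (snd i)))"
      by (rule measure_UNION_le) (auto simp: F)
    have m2: "measure lebesgue (cball (fst i) (snd i)) = 2 * snd i" if "i \<in> F" for i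
      using Jpos[OF that] by (simp add: cb)
    have step: "q * (2 * snd i) - p * (2 * snd i) \<le> integral (?J i) \<phi>" if "i \<in> F" for i
    proof -
      have gi: "g integrable_on ?J i" using Jsub[OF that] by (intro ginterval) auto
      have "integral (?J i) (\<lambda>t. g t - p) = integral (?J i) g - p * (2 * snd i)"
      proof -
        have "integral (?J i) (\<lambda>t. g t - p) = integral (?J i) g - integral (?J i) (\<lambda>t. p)"
          by (rule integral_diff[OF gi]) (simp add: integrable_const_ivl)
        moreover have "integral (?J i) (\<lambda>t. p) = p * (2 * snd i)"
          using Jpos[OF that] by (simp add: integral_const_real content_real)
        ultimately show ?thesis by simp
      qed
      moreover have "integral (?J i) (\<lambda>t. g t - p) \<le> integral (?J i) \<phi>"
        using gi Jsub[OF that] by (intro integral_le \<phi>on integrable_diff) (auto simp: \<phi>_def)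
      ultimately show ?thesis using Jint[OF that] by linarith
    qed
    have neg: "pairwise (\<lambda>i i'. negligible (?J i \<inter> ?J i')) F"
      using pairwise_subset[OF Cdisj F(1)] unfolding pairwise_def disjnt_def cb by auto
    have "(\<phi> has_integral (\<Sum>i\<in>F. integral (?J i) \<phi>)) (\<Union>i\<in>F. ?J i)"
      by (rule has_integral_UN[OF F(2) _ neg]) (use Jsub \<phi>on in \<open>auto intro!: integrable_integral\<close>)
    then have "(\<Sum>i\<in>F. integral (?J i) \<phi>) = integral (\<Union>i\<in>F. ?J i) \<phi>"
      by (simp add: integral_unique)
    also have "\<dots> \<le> integral (V \<inter> {0..1}) \<phi>"
    proof (rule integral_subset_le)
      show U: "(\<Union>i\<in>F. ?J i) \<subseteq> V \<inter> {0..1}" using Jsub by blast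
      have "(\<Union>i\<in>F. ?J i) \<in> sets lebesgue" by (rule sets.finite_UN[OF F(2)]) simp
      then show "\<phi> integrable_on (\<Union>i\<in>F. ?J i)" using U by (intro \<phi>on) auto
      show "\<phi> integrable_on V \<inter> {0..1}" using V(1) by (intro \<phi>on) auto
    qed (use \<phi>nn in auto)
    finally have "(\<Sum>i\<in>F. q * (2 * snd i) - p * (2 * snd i)) < e * (q - p)"
      using sum_mono[of F _ "\<lambda>i. integral (?J i) \<phi>", OF step] Vsmall by linarith
    moreover have "(\<Sum>i\<in>F. q * (2 * snd i) - p * (2 * snd i)) = (\<Sum>i\<in>F. (q - p) * (2 * snd i))"
      by (rule sum.cong) (auto simp: algebra_simps)
    moreover have "(\<Sum>i\<in>F. (q - p) * (2 * snd i)) = (q - p) * (\<Sum>i\<in>F. 2 * snd i)"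
      by (rule sum_distrib_left[symmetric])
    ultimately have "(q - p) * (\<Sum>i\<in>F. 2 * snd i) < (q - p) * e" by (simp add: mult.commute)
    then have "(\<Sum>i\<in>F. 2 * snd i) \<le> e" using pq by simp
    moreover have "(\<Sum>i\<in>F. measure lebesgue (cball (fst i) (snd i))) = (\<Sum>i\<in>F. 2 * snd i)"
      by (rule sum.cong[OF refl]) (rule m2)
    ultimately show ?thesis using m1 by linarith
  qed
  define W where "W = (\<Union>i\<in>C. cball (fst i) (snd i))"
  have Wm: "W \<in> lmeasurable" and Wle: "measure lebesgue W \<le> e"
    unfolding W_def by (rule fmeasurable_UN_bound[OF C(1) _ bound], simp, assumption+)
       (rule measure_UN_bound[OF C(1) _ bound], simp, assumption+)
  have Nm: "?E - W \<in> lmeasurable" using Cneg unfolding W_def by (rule negligible_imp_measurable)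
  have "measure lebesgue (W \<union> (?E - W)) \<le> measure lebesgue W + measure lebesgue (?E - W)"
    using Wm Nm by (intro measure_Un_le) auto
  also have "measure lebesgue (?E - W) = 0" using Cneg unfolding W_def by (rule negligible_imp_measure0)
  finally have "measure lebesgue (W \<union> (?E - W)) \<le> e" using Wle by simp
  moreover have "W \<union> (?E - W) \<in> lmeasurable" using Wm Nm by (rule fmeasurable.Un)
  moreover have "?E \<subseteq> W \<union> (?E - W)" by blast
  ultimately show "\<exists>T. ?E \<subseteq> T \<and> T \<in> lmeasurable \<and> measure lebesgue T \<le> e" by blast
qed

lemma quot_bound: fixes I h c e :: real shows "0 < h \<Longrightarrow> (c - e) * h \<le> I \<Longrightarrow> I \<le> (c + e) * h \<Longrightarrow> \<bar>I / h - c\<bar> \<le> e"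
  by (simp add: abs_le_iff field_simps)

lemma ub_ae:
  fixes g :: "real \<Rightarrow> real"
  assumes g: "g absolutely_integrable_on {0..1}"
  shows "negligible {t \<in> {0..1}. \<not>(\<forall>e>0. \<exists>d>0. \<forall>a b. a \<le> t \<longrightarrow> t \<le> b \<longrightarrow> a < b \<longrightarrow> b - a < d \<longrightarrow> 0 \<le> a \<longrightarrow> b \<le> 1 \<longrightarrow> integral {a..b} g \<le> (g t + e) * (b - a))}"
    (is "negligible ?B")
proof -
  define E where "E p q = {t \<in> {0..1}. g t < p \<and> (\<forall>d>0. \<exists>a b. a \<le> t \<and> t \<le> b \<and> a < b \<and> b - a < d \<and> 0 \<le> a \<and> b \<le> 1 \<and> q * (b - a) < integral {a..b} g)}" for p q
  define I where "I = {pq :: real \<times> real. fst pq \<in> \<rat> \<and> snd pq \<in> \<rat> \<and> fst pq < snd pq}"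
  have "countable I"
  proof -
    have "I \<subseteq> \<rat> \<times> \<rat>" by (auto simp: I_def)
    moreover have "countable (\<rat> \<times> (\<rat>::real set))" by (simp add: countable_rat)
    ultimately show ?thesis by (rule countable_subset)
  qed
  have "negligible (\<Union>((\<lambda>pq. E (fst pq) (snd pq)) ` I))"
  proof (rule negligible_countable_Union)
    show "countable ((\<lambda>pq. E (fst pq) (snd pq)) ` I)" using \<open>countable I\<close> by simp
    show "negligible S" if "S \<in> (\<lambda>pq. E (fst pq) (snd pq)) ` I" for S
      using that Epq_negligible[OF g] unfolding E_def I_def by auto
  qed
  moreover have "?B \<subseteq> \<Union>((\<lambda>pq. E (fst pq) (snd pq)) ` I)"
  proof
    fix t assume t: "t \<in> ?B"
    then obtain e where e: "e > 0" and ne: "\<forall>d>0. \<exists>a b. a \<le> t \<and> t \<le> b \<and> a < b \<and> b - a < d \<and> 0 \<le> a \<and> b \<le> 1 \<and> \<not> integral {a..b} g \<le> (g t + e) * (b - a)"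
      by auto
    obtain p where p: "p \<in> \<rat>" "g t < p" "p < g t + e / 2" using Rats_dense_in_real[of "g t" "g t + e/2"] e by auto
    obtain q where q: "q \<in> \<rat>" "g t + e / 2 < q" "q < g t + e" using Rats_dense_in_real[of "g t + e/2" "g t + e"] e by auto
    have "t \<in> E p q"
      unfolding E_def
    proof (intro CollectI conjI allI impI)
      show "t \<in> {0..1}" using t by auto
      show "g t < p" by fact
      fix d :: real assume "d > 0"
      then obtain a b where ab: "a \<le> t" "t \<le> b" "a < b" "b - a < d" "0 \<le> a" "b \<le> 1" "(g t + e) * (b - a) < integral {a..b} g"
        using ne by force
      have "q * (b - a) \<le> (g t + e) * (b - a)" by (rule mult_right_mono) (use q ab in linarith)+
      then have "q * (b - a) < integral {a..b} g" using ab(7) by linarith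
      then show "\<exists>a b. a \<le> t \<and> t \<le> b \<and> a < b \<and> b - a < d \<and> 0 \<le> a \<and> b \<le> 1 \<and> q * (b - a) < integral {a..b} g"
        using ab(1-6) by blast
    qed
    moreover have "(p, q) \<in> I" using p q by (auto simp: I_def)
    ultimately show "t \<in> \<Union>((\<lambda>pq. E (fst pq) (snd pq)) ` I)" by force
  qed
  ultimately show ?thesis by (rule negligible_subset)
qed

lemma lebesgue_diff:
  fixes g :: "real \<Rightarrow> real"
  assumes g: "g absolutely_integrable_on {0..1}"
  obtains N where "negligible N"
    "\<And>t. t \<in> {0..1} - N \<Longrightarrow> ((\<lambda>u. integral {0..u} g) has_real_derivative g t) (at t within {0..1})"
proof -
  have mg: "(\<lambda>t. - g t) absolutely_integrable_on {0..1}"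
    using set_integral_diff(1)[OF absolutely_integrable_zero g] by simp
  define P where "P f t = (\<forall>e>0. \<exists>d>0. \<forall>a b. a \<le> t \<longrightarrow> t \<le> b \<longrightarrow> a < b \<longrightarrow> b - a < d \<longrightarrow> 0 \<le> a \<longrightarrow> b \<le> 1 \<longrightarrow> integral {a..b} f \<le> (f t + e) * (b - a))" for f :: "real \<Rightarrow> real" and t
  define N where "N = {t \<in> {0..1}. \<not> P g t} \<union> {t \<in> {0..1}. \<not> P (\<lambda>t. - g t) t}"
  have "negligible N" unfolding N_def P_def
    using ub_ae[OF g] ub_ae[OF mg] by (intro negligible_Un)
  moreover have "((\<lambda>u. integral {0..u} g) has_real_derivative g t) (at t within {0..1})" if t: "t \<in> {0..1} - N" for t
  proof -
    have P1: "P g t" and P2: "P (\<lambda>t. - g t) t" using t by (auto simp: N_def)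
    have gi: "g integrable_on {a..b}" if "{a..b} \<subseteq> {0..1}" for a b
      using integrable_on_subinterval[OF set_lebesgue_integral_eq_integral(1)[OF g] that] .
    have key: "\<bar>integral {a..b} g / (b - a) - g t\<bar> \<le> e / 2"
      if "e > 0" "\<forall>a b. a \<le> t \<longrightarrow> t \<le> b \<longrightarrow> a < b \<longrightarrow> b - a < d1 \<longrightarrow> 0 \<le> a \<longrightarrow> b \<le> 1 \<longrightarrow> integral {a..b} g \<le> (g t + e/2) * (b - a)"
         "\<forall>a b. a \<le> t \<longrightarrow> t \<le> b \<longrightarrow> a < b \<longrightarrow> b - a < d2 \<longrightarrow> 0 \<le> a \<longrightarrow> b \<le> 1 \<longrightarrow> integral {a..b} (\<lambda>t. - g t) \<le> (- g t + e/2) * (b - a)"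
         "a \<le> t" "t \<le> b" "a < b" "b - a < d1" "b - a < d2" "0 \<le> a" "b \<le> 1" for e d1 d2 a b
    proof (rule quot_bound)
      show "0 < b - a" using that by simp
      show "integral {a..b} g \<le> (g t + e / 2) * (b - a)" using that by blast
      have "integral {a..b} (\<lambda>t. - g t) \<le> (- g t + e/2) * (b - a)" using that by blast
      then show "(g t - e / 2) * (b - a) \<le> integral {a..b} g"
        by (simp add: integral_neg algebra_simps)
    qed
    show ?thesis
      unfolding has_field_derivative_iff tendsto_iff eventually_at
    proof (intro allI impI)
      fix e :: real assume "e > 0"
      then have "e / 2 > 0" by simp
      obtain d1 where d1: "d1 > 0" "\<forall>a b. a \<le> t \<longrightarrow> t \<le> b \<longrightarrow> a < b \<longrightarrow> b - a < d1 \<longrightarrow> 0 \<le> a \<longrightarrow> b \<le> 1 \<longrightarrow> integral {a..b} g \<le> (g t + e/2) * (b - a)"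
        using P1 \<open>e/2 > 0\<close> unfolding P_def by blast
      obtain d2 where d2: "d2 > 0" "\<forall>a b. a \<le> t \<longrightarrow> t \<le> b \<longrightarrow> a < b \<longrightarrow> b - a < d2 \<longrightarrow> 0 \<le> a \<longrightarrow> b \<le> 1 \<longrightarrow> integral {a..b} (\<lambda>t. - g t) \<le> (- g t + e/2) * (b - a)"
        using P2 \<open>e/2 > 0\<close> unfolding P_def by blast
      show "\<exists>d>0. \<forall>u\<in>{0..1}. u \<noteq> t \<and> dist u t < d \<longrightarrow> dist ((integral {0..u} g - integral {0..t} g) / (u - t)) (g t) < e"
      proof (intro exI[of _ "min d1 d2"] conjI ballI impI)
        show "0 < min d1 d2" using d1 d2 by simp
        fix u assume u: "u \<in> {0..1}" and ut: "u \<noteq> t \<and> dist u t < min d1 d2"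
        show "dist ((integral {0..u} g - integral {0..t} g) / (u - t)) (g t) < e"
        proof (cases "t < u")
          case True
          have "integral {0..u} g = integral {0..t} g + integral {t..u} g"
            using t u True by (intro Henstock_Kurzweil_Integration.integral_combine[symmetric] gi) auto
          then have "(integral {0..u} g - integral {0..t} g) / (u - t) = integral {t..u} g / (u - t)" by (simp only:) simp
          moreover have "\<bar>integral {t..u} g / (u - t) - g t\<bar> \<le> e / 2"
            using key[OF \<open>e>0\<close> d1(2) d2(2), of t u] t u True ut by (auto simp: dist_real_def)
          ultimately show ?thesis using \<open>e > 0\<close> unfolding dist_real_def by linarith
        next
          case False
          then have True: "u < t" using ut by simp
          have "integral {0..t} g = integral {0..u} g + integral {u..t} g"
            using t u True by (intro Henstock_Kurzweil_Integration.integral_combine[symmetric] gi) auto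
          then have "(integral {0..u} g - integral {0..t} g) / (u - t) = integral {u..t} g / (t - u)"
            by (simp add: divide_simps) (simp add: algebra_simps)
          moreover have "\<bar>integral {u..t} g / (t - u) - g t\<bar> \<le> e / 2"
            using key[OF \<open>e>0\<close> d1(2) d2(2), of u t] t u True ut by (auto simp: dist_real_def)
          ultimately show ?thesis using \<open>e > 0\<close> unfolding dist_real_def by linarith
        qed
      qed
    qed
  qed
  ultimately show ?thesis using that by blast
qed

lemma const_increments:
  fixes D :: "real \<Rightarrow> 'a::real_normed_vector" and \<mu> :: "real \<Rightarrow> real"
  assumes mono: "\<And>s t. 0 \<le> s \<Longrightarrow> s \<le> t \<Longrightarrow> t \<le> 1 \<Longrightarrow> \<mu> s \<le> \<mu> t"
    and inc: "\<And>\<eta>. \<eta> > 0 \<Longrightarrow> \<exists>\<delta>>0. \<forall>s t. 0 \<le> s \<longrightarrow> s \<le> t \<longrightarrow> t \<le> 1 \<longrightarrow> t - s < \<delta> \<longrightarrow> norm (D t - D s) \<le> \<eta> * (\<mu> t - \<mu> s)"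
    and t: "0 \<le> t" "t \<le> 1"
  shows "D t = D 0"
proof -
  have bound: "norm (D t - D 0) \<le> \<eta> * (\<mu> t - \<mu> 0)" if \<eta>pos: "\<eta> > 0" for \<eta>
  proof -
    obtain \<delta> where "\<delta> > 0" and \<delta>: "\<forall>s t. 0 \<le> s \<longrightarrow> s \<le> t \<longrightarrow> t \<le> 1 \<longrightarrow> t - s < \<delta> \<longrightarrow> norm (D t - D s) \<le> \<eta> * (\<mu> t - \<mu> s)"
      using inc[OF \<eta>pos] by blast
    obtain n :: nat where n: "inverse (real (Suc n)) < \<delta>" using reals_Archimedean[OF \<open>\<delta> > 0\<close>] by blast
    define N where "N = Suc n"
    have Npos: "real N > 0" by (simp add: N_def)
    have step: "t / N < \<delta>"
    proof -
      have "t / N \<le> 1 / N" using t Npos by (simp add: divide_right_mono)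
      also have "\<dots> < \<delta>" using n by (simp add: N_def inverse_eq_divide)
      finally show ?thesis .
    qed
    have "k \<le> N \<Longrightarrow> norm (D (k * t / N) - D 0) \<le> \<eta> * (\<mu> (k * t / N) - \<mu> 0)" for k :: nat
    proof (induction k)
      case 0 then show ?case by simp
    next
      case (Suc k)
      define s where "s = k * t / N"
      define s' where "s' = Suc k * t / N"
      have s0: "0 \<le> s" unfolding s_def using t Npos by simp
      have "real k * t \<le> real (Suc k) * t" using t by (intro mult_right_mono) auto
      then have ss': "s \<le> s'" unfolding s_def s'_def using Npos by (intro divide_right_mono) auto
      have "real (Suc k) \<le> real N" using Suc.prems by linarith
      then have "Suc k * t \<le> N * t" using t by (simp add: mult_right_mono)
      then have "Suc k * t / N \<le> N * t / N" using Npos by (intro divide_right_mono) auto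
      also have "N * t / N = t" using Npos by simp
      finally have s'1: "s' \<le> 1" unfolding s'_def using t by linarith
      have "s' - s = t / N" unfolding s_def s'_def by (simp add: add_divide_distrib algebra_simps)
      then have d: "norm (D s' - D s) \<le> \<eta> * (\<mu> s' - \<mu> s)" using \<delta> s0 ss' s'1 step by auto
      have ih: "norm (D s - D 0) \<le> \<eta> * (\<mu> s - \<mu> 0)" using Suc s_def by simp
      have "norm (D s' - D 0) \<le> norm (D s' - D s) + norm (D s - D 0)"
        using norm_triangle_ineq[of "D s' - D s" "D s - D 0"] by simp
      also have "\<dots> \<le> \<eta> * (\<mu> s' - \<mu> 0)" using d ih by (simp add: algebra_simps)
      finally show ?case unfolding s'_def .
    qed
    from this[of N] show ?thesis using Npos by simp
  qed
  have m: "\<mu> 0 \<le> \<mu> t" using mono t by simp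
  show ?thesis
  proof (rule ccontr)
    assume "D t \<noteq> D 0"
    then have c: "norm (D t - D 0) > 0" by simp
    define \<eta> where "\<eta> = norm (D t - D 0) / (2 * (\<mu> t - \<mu> 0 + 1))"
    have "\<eta> > 0" unfolding \<eta>_def using c m by simp
    have "\<eta> * (\<mu> t - \<mu> 0) < norm (D t - D 0)"
    proof -
      have "\<eta> * (\<mu> t - \<mu> 0) \<le> \<eta> * (\<mu> t - \<mu> 0 + 1)" using \<open>\<eta> > 0\<close> by simp
      also have "\<dots> = norm (D t - D 0) / 2" unfolding \<eta>_def using m by (simp add: field_simps)
      finally have "\<eta> * (\<mu> t - \<mu> 0) \<le> norm (D t - D 0) / 2" .
      then show ?thesis using c by linarith
    qed
    with bound[OF \<open>\<eta> > 0\<close>] show False by simp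
  qed
qed

lemma cm_integrable:
  fixes f h :: "real \<Rightarrow> real"
  assumes "continuous_on {0..1} f" "h absolutely_integrable_on {0..1}"
  shows "(\<lambda>t. f t * h t) absolutely_integrable_on {0..1}"
proof (rule absolutely_integrable_bounded_measurable_product_real)
  show "f \<in> borel_measurable (lebesgue_on {0..1})"
    using assms(1) by (rule continuous_imp_measurable_on_sets_lebesgue) simp
  show "bounded (f ` {0..1})"
    using assms(1) by (intro compact_imp_bounded compact_continuous_image) auto
qed (use assms in auto)

lemma ai_sub:
  fixes h :: "real \<Rightarrow> real"
  assumes "h absolutely_integrable_on {0..1}" "0 \<le> s" "s \<le> t" "t \<le> 1"
  shows "h integrable_on {s..t}"
  using integrable_on_subinterval[OF set_lebesgue_integral_eq_integral(1)[OF assms(1)]] assms by auto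

lemma int_diff01:
  fixes h :: "real \<Rightarrow> real"
  assumes "h absolutely_integrable_on {0..1}" "0 \<le> s" "s \<le> t" "t \<le> 1"
  shows "integral {0..t} h - integral {0..s} h = integral {s..t} h"
proof -
  have "integral {0..t} h = integral {0..s} h + integral {s..t} h"
    using assms by (intro Henstock_Kurzweil_Integration.integral_combine[symmetric] ai_sub) auto
  then show ?thesis by simp
qed

lemma exp_rem:
  fixes \<eta> :: real
  assumes "\<eta> > 0"
  shows "\<exists>\<kappa>>0. \<forall>w::complex. cmod w < \<kappa> \<longrightarrow> cmod (exp (- w) - 1 + w) \<le> \<eta> * cmod w"
proof -
  have "((\<lambda>y. (exp y - exp 0) / (y - 0)) \<longlongrightarrow> (1::complex)) (at 0)"
    using DERIV_exp[of "0::complex"] unfolding has_field_derivative_iff by simp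
  then obtain d where "d > 0" and d: "\<forall>y. y \<noteq> 0 \<and> dist y 0 < d \<longrightarrow> dist ((exp y - exp 0) / (y - 0)) (1::complex) < \<eta>"
    using assms unfolding tendsto_iff eventually_at by force
  show ?thesis
  proof (intro exI[of _ d] conjI allI impI)
    show "d > 0" by fact
    fix w :: complex assume w: "cmod w < d"
    show "cmod (exp (- w) - 1 + w) \<le> \<eta> * cmod w"
    proof (cases "w = 0")
      case True then show ?thesis by simp
    next
      case False
      then have "dist ((exp (-w) - 1) / (- w)) 1 < \<eta>" using d[rule_format, of "-w"] w by (simp add: dist_norm)
      then have "cmod ((exp (-w) - 1) / (- w) - 1) < \<eta>" by (simp add: dist_norm)
      moreover have "exp (- w) - 1 + w = (- w) * ((exp (-w) - 1) / (- w) - 1)"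
        using False by (simp add: field_simps)
      ultimately have "cmod (exp (- w) - 1 + w) = cmod w * cmod ((exp (-w) - 1) / (- w) - 1)"
        by (simp add: norm_mult)
      also have "\<dots> \<le> cmod w * \<eta>" using \<open>cmod ((exp (-w) - 1) / (- w) - 1) < \<eta>\<close>
        by (intro mult_left_mono) auto
      finally show ?thesis by (simp add: mult.commute)
    qed
  qed
qed

definition omega :: "(real \<Rightarrow> real) \<Rightarrow> (real \<Rightarrow> real) \<Rightarrow> (real \<Rightarrow> real) \<Rightarrow> (real \<Rightarrow> real) \<Rightarrow> real \<Rightarrow> real" where
  "omega X Y gx gy t = X t / ((X t)\<^sup>2 + (Y t)\<^sup>2) * gy t - Y t / ((X t)\<^sup>2 + (Y t)\<^sup>2) * gx t"

lemma cont_bound: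
  fixes f :: "real \<Rightarrow> real"
  assumes "continuous_on {0..1} f"
  shows "\<exists>B. \<forall>t\<in>{0..1}. \<bar>f t\<bar> \<le> B"
proof -
  have "bounded (f ` {0..1})" using assms by (intro compact_imp_bounded compact_continuous_image) auto
  then obtain B where "\<forall>x\<in>f ` {0..1}. norm x \<le> B" unfolding bounded_iff by blast
  then show ?thesis by auto
qed

lemma angle_lift:
  fixes X Y gx gy :: "real \<Rightarrow> real"
  assumes cX: "continuous_on {0..1} X" and cY: "continuous_on {0..1} Y"
    and ix: "gx absolutely_integrable_on {0..1}" and iy: "gy absolutely_integrable_on {0..1}"
    and eX: "\<And>t. t \<in> {0..1} \<Longrightarrow> X t = X 0 + integral {0..t} gx"
    and eY: "\<And>t. t \<in> {0..1} \<Longrightarrow> Y t = Y 0 + integral {0..t} gy"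
    and pos: "\<And>t. t \<in> {0..1} \<Longrightarrow> (X t)\<^sup>2 + (Y t)\<^sup>2 > 0"
  shows "omega X Y gx gy absolutely_integrable_on {0..1}"
    and "\<exists>\<theta>0 r. \<forall>t\<in>{0..1}. r t > 0 \<and> X t = r t * cos (\<theta>0 + integral {0..t} (omega X Y gx gy))
                                   \<and> Y t = r t * sin (\<theta>0 + integral {0..t} (omega X Y gx gy))"
proof -
  define Q where "Q t = (X t)\<^sup>2 + (Y t)\<^sup>2" for t
  define \<omega> where "\<omega> = omega X Y gx gy"
  define \<rho> where "\<rho> t = X t / Q t * gx t + Y t / Q t * gy t" for t
  have \<omega>_def': "\<omega> t = X t / Q t * gy t - Y t / Q t * gx t" for t
    by (simp add: \<omega>_def omega_def Q_def)
  have cQ: "continuous_on {0..1} Q" unfolding Q_def by (intro continuous_intros cX cY)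
  have Qpos: "t \<in> {0..1} \<Longrightarrow> Q t > 0" for t using pos by (simp add: Q_def)
  have cXQ: "continuous_on {0..1} (\<lambda>t. X t / Q t)"
    using Qpos by (intro continuous_intros cX cQ) force
  have cYQ: "continuous_on {0..1} (\<lambda>t. Y t / Q t)"
    using Qpos by (intro continuous_intros cY cQ) force
  have i\<rho>: "\<rho> absolutely_integrable_on {0..1}"
    unfolding \<rho>_def by (intro set_integral_add(1) cm_integrable cXQ cYQ ix iy)
  have i\<omega>: "\<omega> absolutely_integrable_on {0..1}"
    unfolding \<omega>_def' by (intro set_integral_diff(1) cm_integrable cXQ cYQ ix iy)
  then show "omega X Y gx gy absolutely_integrable_on {0..1}" by (simp add: \<omega>_def)
  define m where "m t = \<bar>\<rho> t\<bar> + \<bar>\<omega> t\<bar>" for t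
  have im: "m absolutely_integrable_on {0..1}"
    unfolding m_def by (intro set_integral_add(1) set_integrable_abs i\<rho> i\<omega>)
  have iX\<rho>: "(\<lambda>t. X t * \<rho> t) absolutely_integrable_on {0..1}" by (intro cm_integrable cX i\<rho>)
  have iY\<rho>: "(\<lambda>t. Y t * \<rho> t) absolutely_integrable_on {0..1}" by (intro cm_integrable cY i\<rho>)
  have iX\<omega>: "(\<lambda>t. X t * \<omega> t) absolutely_integrable_on {0..1}" by (intro cm_integrable cX i\<omega>)
  have iY\<omega>: "(\<lambda>t. Y t * \<omega> t) absolutely_integrable_on {0..1}" by (intro cm_integrable cY i\<omega>)
  have idx: "gx r = X r * \<rho> r - Y r * \<omega> r" if "r \<in> {0..1}" for r
  proof -
    have "Q r \<noteq> 0" using Qpos[OF that] by simp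
    then show ?thesis unfolding \<rho>_def \<omega>_def' by (simp add: field_simps) (simp add: Q_def power2_eq_square algebra_simps)
  qed
  have idy: "gy r = X r * \<omega> r + Y r * \<rho> r" if "r \<in> {0..1}" for r
  proof -
    have "Q r \<noteq> 0" using Qpos[OF that] by simp
    then show ?thesis unfolding \<rho>_def \<omega>_def' by (simp add: field_simps) (simp add: Q_def power2_eq_square algebra_simps)
  qed
  define \<Psi> where "\<Psi> t = integral {0..t} \<rho>" for t
  define \<Phi> where "\<Phi> t = integral {0..t} \<omega>" for t
  define \<mu> where "\<mu> t = integral {0..t} m" for t
  have c\<Psi>: "continuous_on {0..1} \<Psi>" unfolding \<Psi>_def
    by (rule indefinite_integral_continuous_1) (use i\<rho> set_lebesgue_integral_eq_integral(1) in blast)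
  have c\<mu>: "continuous_on {0..1} \<mu>" unfolding \<mu>_def
    by (rule indefinite_integral_continuous_1) (use im set_lebesgue_integral_eq_integral(1) in blast)
  obtain BX where BX: "\<And>t. t \<in> {0..1} \<Longrightarrow> \<bar>X t\<bar> \<le> BX"
    using cont_bound[OF cX] by blast
  obtain BY where BY: "\<And>t. t \<in> {0..1} \<Longrightarrow> \<bar>Y t\<bar> \<le> BY"
    using cont_bound[OF cY] by blast
  obtain B\<Psi> where B\<Psi>: "\<And>t. t \<in> {0..1} \<Longrightarrow> \<bar>\<Psi> t\<bar> \<le> B\<Psi>"
    using cont_bound[OF c\<Psi>] by blast
  have BX0: "BX \<ge> 0" using BX[of 0] by simp
  have BY0: "BY \<ge> 0" using BY[of 0] by simp
  have ucX: "uniformly_continuous_on {0..1} X" by (rule compact_uniformly_continuous[OF cX]) simp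
  have ucY: "uniformly_continuous_on {0..1} Y" by (rule compact_uniformly_continuous[OF cY]) simp
  have uc\<mu>: "uniformly_continuous_on {0..1} \<mu>" by (rule compact_uniformly_continuous[OF c\<mu>]) simp
  define z where "z t = Complex (X t) (Y t)" for t
  define c where "c t = Complex (\<Psi> t) (\<Phi> t)" for t
  define D where "D t = z t * exp (- c t)" for t
  have ReA: "(X t - X s) - (X t * (\<Psi> t - \<Psi> s) - Y t * (\<Phi> t - \<Phi> s))
      = integral {s..t} (\<lambda>r. (X r - X t) * \<rho> r - (Y r - Y t) * \<omega> r)"
    and ImA: "(Y t - Y s) - (X t * (\<Phi> t - \<Phi> s) + Y t * (\<Psi> t - \<Psi> s))
      = integral {s..t} (\<lambda>r. (X r - X t) * \<omega> r + (Y r - Y t) * \<rho> r)"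
    if st: "0 \<le> s" "s \<le> t" "t \<le> 1" for s t
  proof -
    have sub: "{s..t} \<subseteq> {0..1}" using st by auto
    have I: "h integrable_on {s..t}" if "h absolutely_integrable_on {0..1}" for h :: "real \<Rightarrow> real"
      using ai_sub[OF that st] .
    have "X t - X s = integral {0..t} gx - integral {0..s} gx" using eX[of t] eX[of s] st by simp
    also have "\<dots> = integral {s..t} gx" using int_diff01[OF ix st] .
    also have "\<dots> = integral {s..t} (\<lambda>r. X r * \<rho> r - Y r * \<omega> r)"
      by (rule integral_cong) (use idx sub in auto)
    finally have hx: "X t - X s = integral {s..t} (\<lambda>r. X r * \<rho> r - Y r * \<omega> r)" .
    have "Y t - Y s = integral {0..t} gy - integral {0..s} gy" using eY[of t] eY[of s] st by simp
    also have "\<dots> = integral {s..t} gy" using int_diff01[OF iy st] .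
    also have "\<dots> = integral {s..t} (\<lambda>r. X r * \<omega> r + Y r * \<rho> r)"
      by (rule integral_cong) (use idy sub in auto)
    finally have hy: "Y t - Y s = integral {s..t} (\<lambda>r. X r * \<omega> r + Y r * \<rho> r)" .
    have h\<Psi>: "\<Psi> t - \<Psi> s = integral {s..t} \<rho>" unfolding \<Psi>_def using int_diff01[OF i\<rho> st] .
    have h\<Phi>: "\<Phi> t - \<Phi> s = integral {s..t} \<omega>" unfolding \<Phi>_def using int_diff01[OF i\<omega> st] .
    have e1: "integral {s..t} (\<lambda>r. (X r - X t) * \<rho> r - (Y r - Y t) * \<omega> r)
        = integral {s..t} (\<lambda>r. X r * \<rho> r - Y r * \<omega> r) - X t * integral {s..t} \<rho> + Y t * integral {s..t} \<omega>"
    proof -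
      have "(\<lambda>r. (X r - X t) * \<rho> r - (Y r - Y t) * \<omega> r) = (\<lambda>r. ((X r * \<rho> r - Y r * \<omega> r) - X t * \<rho> r) + Y t * \<omega> r)"
        by (auto simp: algebra_simps)
      then show ?thesis
        by (simp add: integral_add integral_diff I iX\<rho> iY\<omega> i\<rho> i\<omega> integrable_diff integrable_add integrable_on_cmult_left integral_mult_right)
    qed
    have e2: "integral {s..t} (\<lambda>r. (X r - X t) * \<omega> r + (Y r - Y t) * \<rho> r)
        = integral {s..t} (\<lambda>r. X r * \<omega> r + Y r * \<rho> r) - X t * integral {s..t} \<omega> - Y t * integral {s..t} \<rho>"
    proof -
      have "(\<lambda>r. (X r - X t) * \<omega> r + (Y r - Y t) * \<rho> r) = (\<lambda>r. ((X r * \<omega> r + Y r * \<rho> r) - X t * \<omega> r) - Y t * \<rho> r)"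
        by (auto simp: algebra_simps)
      then show ?thesis
        by (simp add: integral_add integral_diff I iX\<omega> iY\<rho> i\<rho> i\<omega> integrable_diff integrable_add integrable_on_cmult_left integral_mult_right)
    qed
    show "(X t - X s) - (X t * (\<Psi> t - \<Psi> s) - Y t * (\<Phi> t - \<Phi> s))
      = integral {s..t} (\<lambda>r. (X r - X t) * \<rho> r - (Y r - Y t) * \<omega> r)"
      using hx h\<Psi> h\<Phi> e1 by simp
    show "(Y t - Y s) - (X t * (\<Phi> t - \<Phi> s) + Y t * (\<Psi> t - \<Psi> s))
      = integral {s..t} (\<lambda>r. (X r - X t) * \<omega> r + (Y r - Y t) * \<rho> r)"
      using hy h\<Psi> h\<Phi> e2 by simp
  qed
  have mnn: "0 \<le> m r" for r by (simp add: m_def)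
  have \<mu>diff: "\<mu> t - \<mu> s = integral {s..t} m" if "0 \<le> s" "s \<le> t" "t \<le> 1" for s t
    unfolding \<mu>_def using int_diff01[OF im that] .
  have \<mu>mono: "\<mu> s \<le> \<mu> t" if "0 \<le> s" "s \<le> t" "t \<le> 1" for s t
  proof -
    have "0 \<le> integral {s..t} m" by (rule integral_nonneg) (use ai_sub[OF im that] mnn in auto)
    then show ?thesis using \<mu>diff[OF that] by simp
  qed
  have hw: "cmod (c t - c s) \<le> \<mu> t - \<mu> s" if st: "0 \<le> s" "s \<le> t" "t \<le> 1" for s t
  proof -
    have "c t - c s = Complex (\<Psi> t - \<Psi> s) (\<Phi> t - \<Phi> s)" by (simp add: c_def complex_eq_iff)
    then have "cmod (c t - c s) \<le> \<bar>\<Psi> t - \<Psi> s\<bar> + \<bar>\<Phi> t - \<Phi> s\<bar>" using cmod_le[of "c t - c s"] by simp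
    also have "\<Psi> t - \<Psi> s = integral {s..t} \<rho>" unfolding \<Psi>_def using int_diff01[OF i\<rho> st] .
    also have "\<Phi> t - \<Phi> s = integral {s..t} \<omega>" unfolding \<Phi>_def using int_diff01[OF i\<omega> st] .
    also have "\<bar>integral {s..t} \<rho>\<bar> \<le> integral {s..t} (\<lambda>r. \<bar>\<rho> r\<bar>)"
      by (rule integral_norm_bound_integral[where f=\<rho>, simplified]) (use ai_sub[OF i\<rho> st] ai_sub[OF set_integrable_abs[OF i\<rho>] st] in auto)
    also have "\<bar>integral {s..t} \<omega>\<bar> \<le> integral {s..t} (\<lambda>r. \<bar>\<omega> r\<bar>)"
      by (rule integral_norm_bound_integral[where f=\<omega>, simplified]) (use ai_sub[OF i\<omega> st] ai_sub[OF set_integrable_abs[OF i\<omega>] st] in auto)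
    also have "integral {s..t} (\<lambda>r. \<bar>\<rho> r\<bar>) + integral {s..t} (\<lambda>r. \<bar>\<omega> r\<bar>) = integral {s..t} m"
      unfolding m_def by (rule integral_add[symmetric]) (use ai_sub[OF set_integrable_abs[OF i\<rho>] st] ai_sub[OF set_integrable_abs[OF i\<omega>] st] in auto)
    also have "\<dots> = \<mu> t - \<mu> s" using \<mu>diff[OF st] by simp
    finally show ?thesis by simp
  qed
  have abnd: "\<bar>integral {s..t} (\<lambda>r. a r * \<rho> r + b r * \<omega> r)\<bar> \<le> \<eta> * (\<mu> t - \<mu> s)"
    if st: "0 \<le> s" "s \<le> t" "t \<le> 1" and ca: "continuous_on {0..1} a" and cb: "continuous_on {0..1} b"
      and ab: "\<And>r. r \<in> {s..t} \<Longrightarrow> \<bar>a r\<bar> \<le> \<eta> \<and> \<bar>b r\<bar> \<le> \<eta>" for s t a b \<eta>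
  proof -
    have "\<bar>integral {s..t} (\<lambda>r. a r * \<rho> r + b r * \<omega> r)\<bar> \<le> integral {s..t} (\<lambda>r. \<eta> * m r)"
    proof (rule integral_norm_bound_integral[where f="\<lambda>r. a r * \<rho> r + b r * \<omega> r", simplified])
      show "(\<lambda>r. a r * \<rho> r + b r * \<omega> r) integrable_on {s..t}"
        by (intro ai_sub[OF _ st] set_integral_add(1) cm_integrable ca cb i\<rho> i\<omega>)
      show "(\<lambda>r. \<eta> * m r) integrable_on {s..t}"
        using integrable_cmul[OF ai_sub[OF im st], of \<eta>] by simp
      fix r assume r: "r \<in> {s..t}"
      have "\<bar>a r * \<rho> r + b r * \<omega> r\<bar> \<le> \<bar>a r\<bar> * \<bar>\<rho> r\<bar> + \<bar>b r\<bar> * \<bar>\<omega> r\<bar>"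
        by (metis abs_mult abs_triangle_ineq)
      also have "\<dots> \<le> \<eta> * \<bar>\<rho> r\<bar> + \<eta> * \<bar>\<omega> r\<bar>"
        using ab[OF r] by (intro add_mono mult_right_mono) auto
      finally show "\<bar>a r * \<rho> r + b r * \<omega> r\<bar> \<le> \<eta> * m r" by (simp add: m_def algebra_simps)
    qed
    also have "\<dots> = \<eta> * (\<mu> t - \<mu> s)" using \<mu>diff[OF st] by simp
    finally show ?thesis .
  qed
  have inc: "\<exists>\<delta>>0. \<forall>s t. 0 \<le> s \<longrightarrow> s \<le> t \<longrightarrow> t \<le> 1 \<longrightarrow> t - s < \<delta> \<longrightarrow> norm (D t - D s) \<le> \<eta>' * (\<mu> t - \<mu> s)"
    if "\<eta>' > 0" for \<eta>'
  proof -
    define K0 where "K0 = exp B\<Psi> * (2 + BX + BY)"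
    have K0: "K0 > 0" unfolding K0_def using BX0 BY0 by (intro mult_pos_pos) auto
    define \<eta> where "\<eta> = \<eta>' / K0"
    have "\<eta> > 0" unfolding \<eta>_def using K0 \<open>\<eta>' > 0\<close> by simp
    obtain \<kappa> where "\<kappa> > 0" and \<kappa>: "\<forall>w::complex. cmod w < \<kappa> \<longrightarrow> cmod (exp (- w) - 1 + w) \<le> \<eta> * cmod w"
      using exp_rem[OF \<open>\<eta> > 0\<close>] by blast
    obtain dX where "dX > 0" and dX: "\<forall>x\<in>{0..1}. \<forall>x'\<in>{0..1}. dist x' x < dX \<longrightarrow> dist (X x') (X x) < \<eta>"
      using ucX \<open>\<eta> > 0\<close> unfolding uniformly_continuous_on_def by metis
    obtain dY where "dY > 0" and dY: "\<forall>x\<in>{0..1}. \<forall>x'\<in>{0..1}. dist x' x < dY \<longrightarrow> dist (Y x') (Y x) < \<eta>"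
      using ucY \<open>\<eta> > 0\<close> unfolding uniformly_continuous_on_def by metis
    obtain d\<mu> where "d\<mu> > 0" and d\<mu>: "\<forall>x\<in>{0..1}. \<forall>x'\<in>{0..1}. dist x' x < d\<mu> \<longrightarrow> dist (\<mu> x') (\<mu> x) < \<kappa>"
      using uc\<mu> \<open>\<kappa> > 0\<close> unfolding uniformly_continuous_on_def by metis
    show ?thesis
    proof (intro exI[of _ "min dX (min dY d\<mu>)"] conjI allI impI)
      show "0 < min dX (min dY d\<mu>)" using \<open>dX > 0\<close> \<open>dY > 0\<close> \<open>d\<mu> > 0\<close> by simp
      fix s t :: real assume s0: "0 \<le> s" and st: "s \<le> t" and t1: "t \<le> 1" and d: "t - s < min dX (min dY d\<mu>)"
      have abX: "\<bar>X r - X t\<bar> \<le> \<eta> \<and> \<bar>Y r - Y t\<bar> \<le> \<eta>" if "r \<in> {s..t}" for r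
      proof -
        have r01: "r \<in> {0..1}" "t \<in> {0..1}" using that s0 t1 by auto
        have "dist r t < dX" "dist r t < dY" using that d by (auto simp: dist_real_def)
        then show ?thesis using dX r01 dY by (force simp: dist_real_def)
      qed
      have cXt: "continuous_on {0..1} (\<lambda>r. X r - X t)" by (intro continuous_intros cX)
      have cYt: "continuous_on {0..1} (\<lambda>r. Y r - Y t)" by (intro continuous_intros cY)
      have cYt': "continuous_on {0..1} (\<lambda>r. - (Y r - Y t))" by (intro continuous_intros cY)
      define A where "A = z t - z s - z t * (c t - c s)"
      have fe1: "(\<lambda>r. (X r - X t) * \<rho> r - (Y r - Y t) * \<omega> r) = (\<lambda>r. (X r - X t) * \<rho> r + (- (Y r - Y t)) * \<omega> r)"
        by (rule ext) (simp add: algebra_simps)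
      have "Re A = (X t - X s) - (X t * (\<Psi> t - \<Psi> s) - Y t * (\<Phi> t - \<Phi> s))"
        by (simp add: A_def z_def c_def algebra_simps)
      also have "\<dots> = integral {s..t} (\<lambda>r. (X r - X t) * \<rho> r - (Y r - Y t) * \<omega> r)" by (rule ReA[OF s0 st t1])
      also have "\<dots> = integral {s..t} (\<lambda>r. (X r - X t) * \<rho> r + (- (Y r - Y t)) * \<omega> r)" by (simp only: fe1)
      finally have "Re A = integral {s..t} (\<lambda>r. (X r - X t) * \<rho> r + (- (Y r - Y t)) * \<omega> r)" .
      then have reA: "\<bar>Re A\<bar> \<le> \<eta> * (\<mu> t - \<mu> s)"
        using abnd[OF s0 st t1 cXt cYt', of \<eta>] abX by (auto simp: abs_minus_commute)
      have fe2: "(\<lambda>r. (X r - X t) * \<omega> r + (Y r - Y t) * \<rho> r) = (\<lambda>r. (Y r - Y t) * \<rho> r + (X r - X t) * \<omega> r)"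
        by (rule ext) (simp add: algebra_simps)
      have "Im A = (Y t - Y s) - (X t * (\<Phi> t - \<Phi> s) + Y t * (\<Psi> t - \<Psi> s))"
        by (simp add: A_def z_def c_def algebra_simps)
      also have "\<dots> = integral {s..t} (\<lambda>r. (X r - X t) * \<omega> r + (Y r - Y t) * \<rho> r)" by (rule ImA[OF s0 st t1])
      also have "\<dots> = integral {s..t} (\<lambda>r. (Y r - Y t) * \<rho> r + (X r - X t) * \<omega> r)" by (simp only: fe2)
      finally have "Im A = integral {s..t} (\<lambda>r. (Y r - Y t) * \<rho> r + (X r - X t) * \<omega> r)" .
      then have imA: "\<bar>Im A\<bar> \<le> \<eta> * (\<mu> t - \<mu> s)"
        using abnd[OF s0 st t1 cYt cXt, of \<eta>] abX by auto
      have nA: "cmod A \<le> 2 * \<eta> * (\<mu> t - \<mu> s)" using cmod_le[of A] reA imA by simp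
      define w where "w = c t - c s"
      have w\<mu>: "cmod w \<le> \<mu> t - \<mu> s" unfolding w_def using hw[OF s0 st t1] .
      have "dist (\<mu> t) (\<mu> s) < \<kappa>" using d\<mu> d s0 st t1 by (auto simp: dist_real_def)
      then have "cmod w < \<kappa>" using w\<mu> \<mu>mono[OF s0 st t1] by (simp add: dist_real_def)
      then have nR: "cmod (exp (- w) - 1 + w) \<le> \<eta> * (\<mu> t - \<mu> s)"
        using \<kappa> w\<mu> \<open>\<eta> > 0\<close> by (meson dual_order.trans mult_left_mono less_imp_le)
      have nz: "cmod (z t) \<le> BX + BY"
      proof -
        have "cmod (z t) \<le> \<bar>X t\<bar> + \<bar>Y t\<bar>" using cmod_le[of "z t"] by (simp add: z_def)
        also have "\<dots> \<le> BX + BY" using BX[of t] BY[of t] s0 st t1 by simp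
        finally show ?thesis .
      qed
      have nE: "cmod (exp (- c s)) \<le> exp B\<Psi>"
      proof -
        have "cmod (exp (- c s)) = exp (- \<Psi> s)" by (simp add: norm_exp_eq_Re c_def)
        also have "\<dots> \<le> exp B\<Psi>" using B\<Psi>[of s] s0 st t1 by simp
        finally show ?thesis .
      qed
      have "exp (- c t) = exp (- c s) * exp (- w)"
        by (simp add: w_def exp_add[symmetric])
      then have "D t - D s = exp (- c s) * (A + z t * (exp (- w) - 1 + w))"
        by (simp add: D_def A_def w_def algebra_simps)
      then have "norm (D t - D s) = cmod (exp (- c s)) * cmod (A + z t * (exp (- w) - 1 + w))"
        by (simp add: norm_mult)
      also have "\<dots> \<le> exp B\<Psi> * (2 * \<eta> * (\<mu> t - \<mu> s) + (BX + BY) * (\<eta> * (\<mu> t - \<mu> s)))"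
      proof (rule mult_mono[OF nE])
        have "cmod (A + z t * (exp (- w) - 1 + w)) \<le> cmod A + cmod (z t) * cmod (exp (- w) - 1 + w)"
          using norm_triangle_ineq[of A "z t * (exp (- w) - 1 + w)"] by (simp add: norm_mult)
        also have "\<dots> \<le> 2 * \<eta> * (\<mu> t - \<mu> s) + (BX + BY) * (\<eta> * (\<mu> t - \<mu> s))"
          using nA nz nR BX0 BY0 by (intro add_mono mult_mono) auto
        finally show "cmod (A + z t * (exp (- w) - 1 + w)) \<le> 2 * \<eta> * (\<mu> t - \<mu> s) + (BX + BY) * (\<eta> * (\<mu> t - \<mu> s))" .
      qed auto
      also have "\<dots> = \<eta>' * (\<mu> t - \<mu> s)"
      proof -
        have "exp B\<Psi> * (2 * \<eta> * (\<mu> t - \<mu> s) + (BX + BY) * (\<eta> * (\<mu> t - \<mu> s))) = (K0 * \<eta>) * (\<mu> t - \<mu> s)"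
          by (simp add: K0_def algebra_simps)
        also have "K0 * \<eta> = \<eta>'" unfolding \<eta>_def using K0 by simp
        finally show ?thesis .
      qed
      finally show "norm (D t - D s) \<le> \<eta>' * (\<mu> t - \<mu> s)" .
    qed
  qed
  have Dc: "D t = D 0" if "t \<in> {0..1}" for t
    using const_increments[of \<mu> D t] \<mu>mono inc that by auto
  have c0: "c 0 = 0" by (simp add: c_def \<Psi>_def \<Phi>_def complex_eq_iff)
  have z0: "z 0 \<noteq> 0" using pos[of 0] by (auto simp: z_def complex_eq_iff)
  show "\<exists>\<theta>0 r. \<forall>t\<in>{0..1}. r t > 0 \<and> X t = r t * cos (\<theta>0 + integral {0..t} (omega X Y gx gy))
                                   \<and> Y t = r t * sin (\<theta>0 + integral {0..t} (omega X Y gx gy))"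
  proof (intro exI[of _ "Arg (z 0)"] exI[of _ "\<lambda>t. cmod (z 0) * exp (\<Psi> t)"] ballI conjI)
    fix t :: real assume t: "t \<in> {0..1}"
    show "cmod (z 0) * exp (\<Psi> t) > 0" using z0 by simp
    have "z t * exp (- c t) = z 0" using Dc[OF t] c0 by (simp add: D_def)
    then have "z t = z 0 * exp (c t)"
      by (metis exp_minus_inverse mult.assoc mult.commute mult.right_neutral)
    also have "\<dots> = complex_of_real (cmod (z 0) * exp (\<Psi> t)) * cis (Arg (z 0) + \<Phi> t)"
    proof -
      have "z 0 = complex_of_real (cmod (z 0)) * cis (Arg (z 0))" using rcis_cmod_Arg[of "z 0"] by (simp add: rcis_def)
      moreover have "exp (c t) = complex_of_real (exp (\<Psi> t)) * cis (\<Phi> t)" by (simp add: exp_eq_polar c_def)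
      ultimately show ?thesis by (simp add: cis_mult[symmetric] algebra_simps)
    qed
    finally have zt: "z t = complex_of_real (cmod (z 0) * exp (\<Psi> t)) * cis (Arg (z 0) + \<Phi> t)" .
    show "X t = cmod (z 0) * exp (\<Psi> t) * cos (Arg (z 0) + integral {0..t} (omega X Y gx gy))"
      using arg_cong[OF zt, of Re] by (simp add: z_def \<Phi>_def \<omega>_def)
    show "Y t = cmod (z 0) * exp (\<Psi> t) * sin (Arg (z 0) + integral {0..t} (omega X Y gx gy))"
      using arg_cong[OF zt, of Im] by (simp add: z_def \<Phi>_def \<omega>_def)
  qed
qed

lemma trig_spread:
  fixes \<theta> :: "real \<Rightarrow> real"
  assumes c\<theta>: "continuous_on {0..1} \<theta>"
    and spread: "\<And>s t. s \<in> {0..1} \<Longrightarrow> t \<in> {0..1} \<Longrightarrow> \<bar>\<theta> s - \<theta> t\<bar> < pi / 2"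
    and h1: "ta \<in> {0..1}" "cos (\<theta> ta) \<le> 0" and h2: "tb \<in> {0..1}" "cos (\<theta> tb) > 0"
    and h3: "t3 \<in> {0..1}" "sin (\<theta> t3) \<ge> 0" and h4: "t4 \<in> {0..1}" "sin (\<theta> t4) \<le> 0"
  shows False
proof -
  have cc: "continuous_on {a..b} (\<lambda>t. cos (\<theta> t))" if "0 \<le> a" "b \<le> 1" for a b
    by (intro continuous_intros continuous_on_subset[OF c\<theta>]) (use that in auto)
  obtain tc where tc: "tc \<in> {0..1}" "cos (\<theta> tc) = 0"
  proof (cases "ta \<le> tb")
    case True
    obtain x where "x \<ge> ta" "x \<le> tb" "cos (\<theta> x) = 0"
      using IVT'[of "\<lambda>t. cos (\<theta> t)" ta 0 tb] h1 h2 True cc[of ta tb] by auto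
    then show ?thesis using that[of x] h1 h2 by auto
  next
    case False
    obtain x where "x \<ge> tb" "x \<le> ta" "cos (\<theta> x) = 0"
      using IVT2'[of "\<lambda>t. cos (\<theta> t)" ta 0 tb] h1 h2 False cc[of tb ta] by auto
    then show ?thesis using that[of x] h1 h2 by auto
  qed
  have s1: "sin (\<theta> tc) = 1 \<or> sin (\<theta> tc) = -1"
    using sin_cos_squared_add[of "\<theta> tc"] tc(2) by (simp add: power2_eq_1_iff)
  have sform: "sin (\<theta> t) = sin (\<theta> tc) * cos (\<theta> t - \<theta> tc)" for t
    using sin_add[of "\<theta> tc" "\<theta> t - \<theta> tc"] tc(2) by simp
  have cpos: "cos (\<theta> t - \<theta> tc) > 0" if "t \<in> {0..1}" for t
  proof -
    have a: "\<bar>\<theta> t - \<theta> tc\<bar> < pi / 2" using spread[OF that tc(1)] .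
    have a1: "\<theta> t - \<theta> tc < pi / 2" using a by (metis abs_less_iff)
    have a2: "- (\<theta> t - \<theta> tc) < pi / 2" using a by (metis abs_less_iff)
    show ?thesis using a1 a2 by (intro cos_gt_zero_pi) linarith+
  qed
  from s1 show False
  proof
    assume "sin (\<theta> tc) = 1"
    then have "sin (\<theta> t4) > 0" using sform[of t4] cpos[OF h4(1)] by simp
    then show False using h4 by simp
  next
    assume "sin (\<theta> tc) = -1"
    then have "sin (\<theta> t3) < 0" using sform[of t3] cpos[OF h3(1)] by simp
    then show False using h3 by simp
  qed
qed

lemma turning_bound:
  fixes X Y \<omega> r :: "real \<Rightarrow> real" and \<theta>0 :: real
  assumes i\<omega>: "\<omega> absolutely_integrable_on {0..1}"
    and rep: "\<forall>t\<in>{0..1}. r t > 0 \<and> X t = r t * cos (\<theta>0 + integral {0..t} \<omega>) \<and> Y t = r t * sin (\<theta>0 + integral {0..t} \<omega>)"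
    and cl: "X 1 = X 0" "Y 1 = Y 0"
    and h1: "ta \<in> {0..1}" "X ta \<le> 0" and h2: "tb \<in> {0..1}" "X tb > 0"
    and h3: "t3 \<in> {0..1}" "Y t3 \<ge> 0" and h4: "t4 \<in> {0..1}" "Y t4 \<le> 0"
  shows "integral {0..1} (\<lambda>t. \<bar>\<omega> t\<bar>) \<ge> pi"
proof -
  define \<Phi> where "\<Phi> t = integral {0..t} \<omega>" for t
  define \<theta> where "\<theta> t = \<theta>0 + \<Phi> t" for t
  define V where "V a b = integral {a..b} (\<lambda>t. \<bar>\<omega> t\<bar>)" for a b
  have ia: "(\<lambda>t. \<bar>\<omega> t\<bar>) absolutely_integrable_on {0..1}" by (rule set_integrable_abs[OF i\<omega>])
  have c\<Phi>: "continuous_on {0..1} \<Phi>" unfolding \<Phi>_def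
    by (rule indefinite_integral_continuous_1) (use i\<omega> set_lebesgue_integral_eq_integral(1) in blast)
  have c\<theta>: "continuous_on {0..1} \<theta>" unfolding \<theta>_def by (intro continuous_intros c\<Phi>)
  have \<Phi>0: "\<Phi> 0 = 0" by (simp add: \<Phi>_def)
  have Vb: "\<bar>\<Phi> b - \<Phi> a\<bar> \<le> V a b" if ab: "0 \<le> a" "a \<le> b" "b \<le> 1" for a b
  proof -
    have "\<Phi> b - \<Phi> a = integral {a..b} \<omega>" unfolding \<Phi>_def using int_diff01[OF i\<omega> ab] .
    also have "\<bar>\<dots>\<bar> \<le> V a b" unfolding V_def
      by (rule integral_norm_bound_integral[where f=\<omega>, simplified]) (use ai_sub[OF i\<omega> ab] ai_sub[OF ia ab] in auto)
    finally show ?thesis .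
  qed
  have Vadd: "V 0 1 = V 0 a + V a b + V b 1" if ab: "0 \<le> a" "a \<le> b" "b \<le> 1" for a b
  proof -
    have "V 0 1 = V 0 b + V b 1" unfolding V_def
      using ab by (intro Henstock_Kurzweil_Integration.integral_combine[symmetric] ai_sub[OF ia]) auto
    moreover have "V 0 b = V 0 a + V a b" unfolding V_def
      using ab by (intro Henstock_Kurzweil_Integration.integral_combine[symmetric] ai_sub[OF ia]) auto
    ultimately show ?thesis by simp
  qed
  have r0: "r 0 > 0" and r1: "r 1 > 0" using rep by auto
  have X0: "X 0 = r 0 * cos (\<theta> 0)" and Y0: "Y 0 = r 0 * sin (\<theta> 0)"
    and X1: "X 1 = r 1 * cos (\<theta> 1)" and Y1: "Y 1 = r 1 * sin (\<theta> 1)"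
    using rep by (auto simp: \<theta>_def \<Phi>_def)
  have "(r 1)\<^sup>2 = (r 0)\<^sup>2"
  proof -
    have "(r 1)\<^sup>2 = (X 1)\<^sup>2 + (Y 1)\<^sup>2" using X1 Y1 sin_cos_squared_add[of "\<theta> 1"]
      by (simp add: power_mult_distrib algebra_simps flip: distrib_left)
    also have "\<dots> = (X 0)\<^sup>2 + (Y 0)\<^sup>2" using cl by simp
    also have "\<dots> = (r 0)\<^sup>2" using X0 Y0 sin_cos_squared_add[of "\<theta> 0"]
      by (simp add: power_mult_distrib algebra_simps flip: distrib_left)
    finally show ?thesis .
  qed
  then have "r 1 = r 0" using r0 r1 by (simp add: power2_eq_iff_nonneg)
  then have "cos (\<theta> 1) = cos (\<theta> 0)" "sin (\<theta> 1) = sin (\<theta> 0)"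
    using X0 X1 Y0 Y1 cl r0 by auto
  then obtain k :: int where k: "\<theta> 1 = \<theta> 0 + 2 * pi * k" using sin_cos_eq_iff by metis
  then have \<Phi>1: "\<Phi> 1 = 2 * pi * k" using \<Phi>0 by (simp add: \<theta>_def)
  show ?thesis
  proof (cases "k = 0")
    case False
    then have "\<bar>real_of_int k\<bar> \<ge> 1" by linarith
    then have "2 * pi * 1 \<le> \<bar>\<Phi> 1 - \<Phi> 0\<bar>" using \<Phi>1 \<Phi>0 by (simp add: abs_mult)
    also have "\<dots> \<le> V 0 1" using Vb[of 0 1] by simp
    finally show ?thesis unfolding V_def using pi_gt_zero by linarith
  next
    case True
    then have \<Phi>1': "\<Phi> 1 = 0" using \<Phi>1 by simp
    obtain tM where tM: "tM \<in> {0..1}" "\<And>t. t \<in> {0..1} \<Longrightarrow> \<Phi> t \<le> \<Phi> tM"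
      using continuous_attains_sup[OF compact_Icc _ c\<Phi>] by auto
    obtain tm where tm: "tm \<in> {0..1}" "\<And>t. t \<in> {0..1} \<Longrightarrow> \<Phi> tm \<le> \<Phi> t"
      using continuous_attains_inf[OF compact_Icc _ c\<Phi>] by auto
    have M0: "\<Phi> tM \<ge> 0" and m0: "\<Phi> tm \<le> 0" using tM(2)[of 0] tm(2)[of 0] \<Phi>0 by auto
    have spread: "\<Phi> tM - \<Phi> tm \<ge> pi / 2"
    proof (rule ccontr)
      assume "\<not> ?thesis"
      then have sp: "\<bar>\<theta> s - \<theta> t\<bar> < pi / 2" if "s \<in> {0..1}" "t \<in> {0..1}" for s t
        using tM(2)[OF that(1)] tM(2)[OF that(2)] tm(2)[OF that(1)] tm(2)[OF that(2)]
        by (auto simp: \<theta>_def abs_if)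
      have sgn: "X t = r t * cos (\<theta> t)" "Y t = r t * sin (\<theta> t)" "r t > 0" if "t \<in> {0..1}" for t
        using rep that by (auto simp: \<theta>_def \<Phi>_def)
      have "cos (\<theta> ta) \<le> 0" using sgn[OF h1(1)] h1(2) by (simp add: mult_le_0_iff)
      moreover have "cos (\<theta> tb) > 0" using sgn[OF h2(1)] h2(2) by (simp add: zero_less_mult_iff)
      moreover have "sin (\<theta> t3) \<ge> 0" using sgn[OF h3(1)] h3(2) by (simp add: zero_le_mult_iff)
      moreover have "sin (\<theta> t4) \<le> 0" using sgn[OF h4(1)] h4(2) by (simp add: mult_le_0_iff)
      ultimately show False
        using trig_spread[OF c\<theta> sp h1(1) _ h2(1) _ h3(1) _ h4(1)] by blast
    qed
    have pp: "pi \<le> 2 * (\<Phi> tM - \<Phi> tm)" using spread by simp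
    have "2 * (\<Phi> tM - \<Phi> tm) \<le> V 0 1"
    proof (cases "tm \<le> tM")
      case True
      have "V 0 1 = V 0 tm + V tm tM + V tM 1" using Vadd[of tm tM] True tm tM by auto
      moreover have "\<bar>\<Phi> tm - \<Phi> 0\<bar> \<le> V 0 tm" using Vb[of 0 tm] tm by auto
      moreover have "\<bar>\<Phi> tM - \<Phi> tm\<bar> \<le> V tm tM" using Vb[of tm tM] tm tM True by auto
      moreover have "\<bar>\<Phi> 1 - \<Phi> tM\<bar> \<le> V tM 1" using Vb[of tM 1] tM by auto
      ultimately show ?thesis using \<Phi>0 \<Phi>1' M0 m0 by (smt (verit))
    next
      case False
      have "V 0 1 = V 0 tM + V tM tm + V tm 1" using Vadd[of tM tm] False tm tM by auto
      moreover have "\<bar>\<Phi> tM - \<Phi> 0\<bar> \<le> V 0 tM" using Vb[of 0 tM] tM by auto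
      moreover have "\<bar>\<Phi> tm - \<Phi> tM\<bar> \<le> V tM tm" using Vb[of tM tm] tm tM False by auto
      moreover have "\<bar>\<Phi> 1 - \<Phi> tm\<bar> \<le> V tm 1" using Vb[of tm 1] tm by auto
      ultimately show ?thesis using \<Phi>0 \<Phi>1' M0 m0 by (smt (verit))
    qed
    with pp show ?thesis unfolding V_def by (rule order_trans)
  qed
qed

lemma lborel_to_lebesgue:
  fixes g :: "real \<Rightarrow> real"
  assumes "set_integrable lborel A g"
  shows "g absolutely_integrable_on A"
  using assms unfolding set_integrable_def
  by (simp add: integrable_completion borel_measurable_integrable)

lemma vd01:
  assumes "(f has_real_derivative D) (at t within {0..1})" "t \<in> {0..1}"
  shows "vector_derivative f (at t within {0..1}) = D"
proof -
  have "(f has_vector_derivative D) (at t within cbox 0 1)"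
    using assms(1) by (simp add: has_real_derivative_iff_has_vector_derivative)
  then have "vector_derivative f (at t within cbox 0 1) = D"
    using vector_derivative_within_cbox[of 0 1 t f D] assms(2) by auto
  then show ?thesis by simp
qed

lemma H2_props:
  assumes "H2_01 f"
  obtains f' g N where
    "continuous_on {0..1} f'"
    "\<And>t. t \<in> {0..1} \<Longrightarrow> (f has_real_derivative f' t) (at t within {0..1})"
    "\<And>t. t \<in> {0..1} \<Longrightarrow> d1 f t = f' t"
    "g absolutely_integrable_on {0..1}"
    "(\<lambda>t. (g t)\<^sup>2) absolutely_integrable_on {0..1}"
    "\<And>t. t \<in> {0..1} \<Longrightarrow> f' t = f' 0 + integral {0..t} g"
    "negligible N"
    "\<And>t. t \<in> {0..1} - N \<Longrightarrow> d2 f t = g t"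
proof -
  obtain f' g where c: "continuous_on {0..1} f'"
    and dv: "\<forall>t\<in>{0..1}. (f has_vector_derivative f' t) (at t within {0..1})"
    and ig: "set_integrable lborel {0..1} g" and ig2: "set_integrable lborel {0..1} (\<lambda>t. (g t)\<^sup>2)"
    and eq: "\<forall>t\<in>{0..1}. f' t = f' 0 + (LBINT s=0..t. g s)"
    using assms unfolding H2_01_def by blast
  have dr: "(f has_real_derivative f' t) (at t within {0..1})" if "t \<in> {0..1}" for t
    using dv that by (simp add: has_real_derivative_iff_has_vector_derivative)
  have d1e: "d1 f t = f' t" if "t \<in> {0..1}" for t
    unfolding d1_def using vd01[OF dr[OF that] that] .
  have ag: "g absolutely_integrable_on {0..1}" by (rule lborel_to_lebesgue[OF ig])
  have ag2: "(\<lambda>t. (g t)\<^sup>2) absolutely_integrable_on {0..1}" by (rule lborel_to_lebesgue[OF ig2])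
  have eq': "f' t = f' 0 + integral {0..t} g" if "t \<in> {0..1}" for t
  proof -
    have "set_integrable lborel {0..t} g" by (rule set_integrable_subset[OF ig]) (use that in auto)
    then have "(LBINT s=0..t. g s) = integral {0..t} g"
      using interval_integral_eq_integral[of 0 t g] that by (simp add: zero_ereal_def)
    moreover have "f' t = f' 0 + (LBINT s=0..t. g s)" using eq that by blast
    ultimately show ?thesis by simp
  qed
  obtain N where N: "negligible N"
    and dN: "\<And>t. t \<in> {0..1} - N \<Longrightarrow> ((\<lambda>u. integral {0..u} g) has_real_derivative g t) (at t within {0..1})"
    using lebesgue_diff[OF ag] by blast
  have d2e: "d2 f t = g t" if t: "t \<in> {0..1} - N" for t
  proof -
    have "((\<lambda>u. f' 0 + integral {0..u} g) has_real_derivative 0 + g t) (at t within {0..1})"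
      by (intro DERIV_add DERIV_const dN t)
    then have "((\<lambda>u. f' 0 + integral {0..u} g) has_real_derivative g t) (at t within {0..1})" by simp
    then have "(d1 f has_real_derivative g t) (at t within {0..1})"
    proof (rule has_field_derivative_transform_within[where d=1])
      show "t \<in> {0..1}" using t by simp
      fix u :: real assume u: "u \<in> {0..1}"
      show "f' 0 + integral {0..u} g = d1 f u" using d1e[OF u] eq'[OF u] by simp
    qed simp
    then show ?thesis unfolding d2_def d1_def[of "d1 f"] using vd01[of "d1 f" "g t" t] t by simp
  qed
  show ?thesis using that[OF c dr d1e ag ag2 eq' N d2e] by blast
qed

lemma final_ineq: fixes u L \<alpha> :: real shows "u > 0 \<Longrightarrow> L \<ge> 1 \<Longrightarrow> \<alpha>*(u+1) \<ge> 1 \<Longrightarrow> \<alpha> > 0 \<Longrightarrow> u / L + \<alpha> * L > 1"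
proof -
  assume a: "u > 0" "L \<ge> 1" "\<alpha>*(u+1) \<ge> 1" "\<alpha> > 0"
  have key: "u * (u + 1) + L^2 > L * (u + 1)"
  proof (cases "L \<ge> u")
    case True
    have "(L - 1) * (L - u) \<ge> 0" using True a by simp
    then show ?thesis using a by (simp add: algebra_simps power2_eq_square) (smt (verit) mult_pos_pos)
  next
    case False
    have "(u + 1) * (u - L) > 0" using False a by simp
    then show ?thesis using a by (simp add: algebra_simps power2_eq_square) (smt (verit) mult_pos_pos)
  qed
  have "L^2 \<le> \<alpha> * (u + 1) * L^2" using a by (simp add: mult_le_cancel_right1)
  then have "u * (u + 1) + \<alpha> * (u + 1) * L^2 > L * (u + 1)" using key by linarith
  then have "(u + 1) * (u + \<alpha> * L^2) > (u + 1) * L" by (simp add: algebra_simps)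
  then have "u + \<alpha> * L^2 > L" using a by (simp add: mult_less_cancel_left_pos)
  then have "(u + \<alpha> * L^2) / L > 1" using a by simp
  moreover have "(u + \<alpha> * L^2) / L = u / L + \<alpha> * L" using a by (simp add: field_simps power2_eq_square)
  ultimately show ?thesis by simp
qed

lemma sq_div_bound:
  fixes w s c :: real
  assumes "s > 0"
  shows "w\<^sup>2 / s \<ge> 2 * c * \<bar>w\<bar> - c\<^sup>2 * s"
proof -
  have "0 \<le> (\<bar>w\<bar> - c * s)\<^sup>2" by simp
  also have "(\<bar>w\<bar> - c * s)\<^sup>2 = s * (w\<^sup>2 / s - (2 * c * \<bar>w\<bar> - c\<^sup>2 * s))"
    using assms by (simp add: field_simps power2_eq_square)
  finally show ?thesis using assms by (simp add: zero_le_mult_iff)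
qed

lemma energy_gt1:
  fixes psi x y :: "real \<Rightarrow> real" and \<epsilon> \<alpha> :: real
  assumes cpsi: "continuous_on UNIV psi" and \<epsilon>: "\<epsilon> > 0" and \<alpha>: "0 < \<alpha>" "\<alpha> < 1"
    and cond: "(pi\<^sup>2 * \<epsilon>\<^sup>2 + 1) * \<alpha> \<ge> 1"
    and adm: "admissible psi x y" and ng: "\<not> graph_curve x y"
  shows "energy \<epsilon> \<alpha> psi x y > 1"
proof -
  have H2x: "H2_01 x" and H2y: "H2_01 y" and spd: "\<And>t. t \<in> {0..1} \<Longrightarrow> speed x y t > 0"
    and x0: "x 0 = 0" and x1: "x 1 = 1" and y01: "y 0 = y 1"
    and dx01: "d1 x 0 = d1 x 1" and dy01: "d1 y 0 = d1 y 1"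
    using adm unfolding admissible_def by auto
  obtain X gx Nx where cX: "continuous_on {0..1} X"
    and dX: "\<And>t. t \<in> {0..1} \<Longrightarrow> (x has_real_derivative X t) (at t within {0..1})"
    and d1x: "\<And>t. t \<in> {0..1} \<Longrightarrow> d1 x t = X t"
    and igx: "gx absolutely_integrable_on {0..1}" and igx2: "(\<lambda>t. (gx t)\<^sup>2) absolutely_integrable_on {0..1}"
    and eX: "\<And>t. t \<in> {0..1} \<Longrightarrow> X t = X 0 + integral {0..t} gx"
    and Nx: "negligible Nx" and d2x: "\<And>t. t \<in> {0..1} - Nx \<Longrightarrow> d2 x t = gx t"
    by (rule H2_props[OF H2x], blast)
  obtain Y gy Ny where cY: "continuous_on {0..1} Y"
    and dY: "\<And>t. t \<in> {0..1} \<Longrightarrow> (y has_real_derivative Y t) (at t within {0..1})"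
    and d1y: "\<And>t. t \<in> {0..1} \<Longrightarrow> d1 y t = Y t"
    and igy: "gy absolutely_integrable_on {0..1}" and igy2: "(\<lambda>t. (gy t)\<^sup>2) absolutely_integrable_on {0..1}"
    and eY: "\<And>t. t \<in> {0..1} \<Longrightarrow> Y t = Y 0 + integral {0..t} gy"
    and Ny: "negligible Ny" and d2y: "\<And>t. t \<in> {0..1} - Ny \<Longrightarrow> d2 y t = gy t"
    by (rule H2_props[OF H2y], blast)
  have Xc: "X 1 = X 0" using dx01 d1x[of 0] d1x[of 1] by simp
  have Yc: "Y 1 = Y 0" using dy01 d1y[of 0] d1y[of 1] by simp
  define S where "S t = sqrt ((X t)\<^sup>2 + (Y t)\<^sup>2)" for t
  have spdS: "speed x y t = S t" if "t \<in> {0..1}" for t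
    using that by (simp add: speed_def S_def d1x d1y)
  have Spos: "S t > 0" if "t \<in> {0..1}" for t using spd[OF that] spdS[OF that] by simp
  have pos: "(X t)\<^sup>2 + (Y t)\<^sup>2 > 0" if "t \<in> {0..1}" for t using Spos[OF that] by (simp add: S_def)
  note AL = angle_lift[OF cX cY igx igy eX eY pos]
  define \<omega> where "\<omega> = omega X Y gx gy"
  have i\<omega>: "\<omega> absolutely_integrable_on {0..1}" using AL(1) by (simp add: \<omega>_def)
  obtain \<theta>0 r where rep: "\<forall>t\<in>{0..1}. r t > 0 \<and> X t = r t * cos (\<theta>0 + integral {0..t} \<omega>) \<and> Y t = r t * sin (\<theta>0 + integral {0..t} \<omega>)"
    using AL(2) unfolding \<omega>_def by blast
  have FX: "(X has_integral 1) {0..1}"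
    using fundamental_theorem_of_calculus[of 0 1 x X] dX x0 x1
    by (simp add: has_real_derivative_iff_has_vector_derivative)
  have FY: "(Y has_integral 0) {0..1}"
    using fundamental_theorem_of_calculus[of 0 1 y Y] dY y01
    by (simp add: has_real_derivative_iff_has_vector_derivative)
  obtain ta where ta: "ta \<in> {0..1}" "X ta \<le> 0"
    using ng d1x unfolding graph_curve_def by force
  obtain tb where tb: "tb \<in> {0..1}" "X tb > 0"
  proof (rule ccontr)
    assume "\<not> thesis"
    then have "\<And>t. t \<in> {0..1} \<Longrightarrow> X t \<le> 0" using that by force
    then have "1 \<le> (0::real)" using has_integral_le[OF FX has_integral_0[of "{0..1::real}"]] by force
    then show False by simp
  qed
  obtain t3 where t3: "t3 \<in> {0..1}" "Y t3 \<ge> 0"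
  proof (rule ccontr)
    assume "\<not> thesis"
    then have neg: "\<And>t. t \<in> {0..1} \<Longrightarrow> Y t < 0" using that by force
    obtain tM where tM: "tM \<in> {0..1}" "\<And>t. t \<in> {0..1} \<Longrightarrow> Y t \<le> Y tM"
      using continuous_attains_sup[OF compact_Icc _ cY] by auto
    have "0 \<le> Y tM" using has_integral_le[OF FY has_integral_const_real[of "Y tM" 0 1]] tM by force
    then show False using neg[OF tM(1)] by simp
  qed
  obtain t4 where t4: "t4 \<in> {0..1}" "Y t4 \<le> 0"
  proof (rule ccontr)
    assume "\<not> thesis"
    then have neg: "\<And>t. t \<in> {0..1} \<Longrightarrow> Y t > 0" using that by force
    obtain tm where tm: "tm \<in> {0..1}" "\<And>t. t \<in> {0..1} \<Longrightarrow> Y tm \<le> Y t"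
      using continuous_attains_inf[OF compact_Icc _ cY] by auto
    have "Y tm \<le> 0" using has_integral_le[OF has_integral_const_real[of "Y tm" 0 1] FY] tm by force
    then show False using neg[OF tm(1)] by simp
  qed
  have Vpi: "integral {0..1} (\<lambda>t. \<bar>\<omega> t\<bar>) \<ge> pi"
    by (rule turning_bound[OF i\<omega> rep Xc Yc ta tb t3 t4])
  have cS: "continuous_on {0..1} S" unfolding S_def by (intro continuous_intros cX cY)
  have iS: "S absolutely_integrable_on {0..1}"
    using cm_integrable[OF cS absolutely_integrable_on_const[of "{0..1}" 1]] by simp
  define L where "L = integral {0..1} S"
  have L1: "L \<ge> 1"
  proof -
    have "integral {0..1} X \<le> integral {0..1} S"
    proof (rule integral_le)
      show "X integrable_on {0..1}" using FX by blast
      show "S integrable_on {0..1}" using iS set_lebesgue_integral_eq_integral(1) by blast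
      show "X t \<le> S t" for t unfolding S_def by (rule real_le_rsqrt) simp
    qed
    then show ?thesis using FX unfolding L_def by (simp add: integral_unique)
  qed
  define V where "V = integral {0..1} (\<lambda>t. \<bar>\<omega> t\<bar>)"
  have iA: "(\<lambda>t. \<bar>\<omega> t\<bar>) absolutely_integrable_on {0..1}" by (rule set_integrable_abs[OF i\<omega>])
  define Th where "Th t = Theta psi \<alpha> (x t, y t)" for t
  define e where "e t = \<epsilon>\<^sup>2 * (d1 x t * d2 y t - d2 x t * d1 y t)\<^sup>2 / (speed x y t) ^ 5 + Theta psi \<alpha> (x t, y t) * speed x y t" for t
  define e' where "e' t = \<epsilon>\<^sup>2 * (X t * gy t - gx t * Y t)\<^sup>2 / (S t) ^ 5 + Th t * S t" for t
  have ee': "e t = e' t" if "t \<in> {0..1} - (Nx \<union> Ny)" for t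
    using that by (simp add: e_def e'_def Th_def d1x d1y d2x d2y spdS)
  have Th: "\<alpha> \<le> Th t \<and> Th t \<le> 1" for t using \<alpha> by (simp add: Th_def Theta_def)
  have ie': "e' absolutely_integrable_on {0..1}"
  proof -
    have mX: "X \<in> borel_measurable (lebesgue_on {0..1})" by (rule continuous_imp_measurable_on_sets_lebesgue[OF cX]) simp
    have mY: "Y \<in> borel_measurable (lebesgue_on {0..1})" by (rule continuous_imp_measurable_on_sets_lebesgue[OF cY]) simp
    have mS: "S \<in> borel_measurable (lebesgue_on {0..1})" by (rule continuous_imp_measurable_on_sets_lebesgue[OF cS]) simp
    have mgx: "gx \<in> borel_measurable (lebesgue_on {0..1})" using igx absolutely_integrable_measurable[of "{0..1}" gx] by simp
    have mgy: "gy \<in> borel_measurable (lebesgue_on {0..1})" using igy absolutely_integrable_measurable[of "{0..1}" gy] by simp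
    have cx: "continuous_on {0..1} x"
      by (rule continuous_on_vector_derivative) (use dX in \<open>auto simp: has_real_derivative_iff_has_vector_derivative\<close>)
    have cy: "continuous_on {0..1} y"
      by (rule continuous_on_vector_derivative) (use dY in \<open>auto simp: has_real_derivative_iff_has_vector_derivative\<close>)
    have cpx: "continuous_on {0..1} (\<lambda>t. psi (x t))"
      by (rule continuous_on_compose2[OF cpsi cx]) auto
    define Z where "Z = {t. y t = psi (x t)}"
    have "closed {t \<in> {0..1}. y t - psi (x t) = 0}"
      by (rule continuous_closed_preimage_constant) (auto intro!: continuous_intros cy cpx)
    then have "{t \<in> {0..1}. y t - psi (x t) = 0} \<in> sets lebesgue" by simp
    moreover have "Z \<inter> space (lebesgue_on {0..1}) = {t \<in> {0..1}. y t - psi (x t) = 0}" by (auto simp: Z_def)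
    ultimately have Zm: "Z \<inter> space (lebesgue_on {0..1}) \<in> sets (lebesgue_on {0..1})"
      by (auto simp: sets_restrict_space_iff)
    have Th_eq: "Th = (\<lambda>t. if t \<in> Z then \<alpha> else 1)" by (auto simp: Th_def Theta_def Z_def fun_eq_iff)
    have mTh: "Th \<in> borel_measurable (lebesgue_on {0..1})"
      unfolding Th_eq by (rule measurable_If_set[OF _ _ Zm]) auto
    have me': "e' \<in> borel_measurable (lebesgue_on {0..1})"
      unfolding e'_def by (intro borel_measurable_add borel_measurable_times borel_measurable_divide borel_measurable_power borel_measurable_diff mX mY mS mgx mgy mTh) auto
    obtain BX where BX: "\<forall>t\<in>{0..1}. \<bar>X t\<bar> \<le> BX" using cont_bound[OF cX] by blast
    obtain BY where BY: "\<forall>t\<in>{0..1}. \<bar>Y t\<bar> \<le> BY" using cont_bound[OF cY] by blast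
    obtain BS where BS: "\<forall>t\<in>{0..1}. \<bar>S t\<bar> \<le> BS" using cont_bound[OF cS] by blast
    define B where "B = max BX BY"
    obtain tm where tm: "tm \<in> {0..1}" "\<And>t. t \<in> {0..1} \<Longrightarrow> S tm \<le> S t"
      using continuous_attains_inf[OF compact_Icc _ cS] by auto
    define s0 where "s0 = S tm"
    have s0: "s0 > 0" unfolding s0_def using Spos[OF tm(1)] .
    define K where "K = \<epsilon>\<^sup>2 * (2 * B\<^sup>2) / s0 ^ 5"
    define Bd where "Bd t = K * ((gx t)\<^sup>2 + (gy t)\<^sup>2) + BS" for t
    have iBd: "Bd integrable_on {0..1}"
    proof -
      have "Bd absolutely_integrable_on {0..1}"
        unfolding Bd_def by (intro set_integral_add(1) set_integrable_mult_right igx2 igy2 absolutely_integrable_on_const) auto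
      then show ?thesis using set_lebesgue_integral_eq_integral(1) by blast
    qed
    have bnd: "norm (e' t) \<le> Bd t" if t: "t \<in> {0..1}" for t
    proof -
      have "\<bar>X t\<bar> \<le> BX" "\<bar>Y t\<bar> \<le> BY" using BX BY t by auto
      then have XB: "\<bar>X t\<bar> \<le> B" and YB: "\<bar>Y t\<bar> \<le> B" unfolding B_def by (auto simp: le_max_iff_disj)
      define N where "N = (X t * gy t - gx t * Y t)\<^sup>2"
      have N0: "N \<ge> 0" by (simp add: N_def)
      have "N \<le> 2 * ((X t * gy t)\<^sup>2 + (gx t * Y t)\<^sup>2)"
        unfolding N_def by (smt (verit) power2_diff zero_le_power2 power2_sum sum_squares_bound)
      also have "\<dots> \<le> 2 * (B\<^sup>2 * (gy t)\<^sup>2 + (gx t)\<^sup>2 * B\<^sup>2)"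
      proof -
        have X2: "(X t)\<^sup>2 \<le> B\<^sup>2" using power_mono[OF XB abs_ge_zero, of 2] by simp
        have Y2: "(Y t)\<^sup>2 \<le> B\<^sup>2" using power_mono[OF YB abs_ge_zero, of 2] by simp
        have m1: "(X t)\<^sup>2 * (gy t)\<^sup>2 \<le> B\<^sup>2 * (gy t)\<^sup>2" by (rule mult_right_mono[OF X2]) simp
        have m2: "(gx t)\<^sup>2 * (Y t)\<^sup>2 \<le> (gx t)\<^sup>2 * B\<^sup>2" by (rule mult_left_mono[OF Y2]) simp
        have e1: "(X t * gy t)\<^sup>2 = (X t)\<^sup>2 * (gy t)\<^sup>2" and e2: "(gx t * Y t)\<^sup>2 = (gx t)\<^sup>2 * (Y t)\<^sup>2"
          by (simp_all add: power_mult_distrib)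
        show ?thesis unfolding e1 e2 by (rule mult_left_mono[OF add_mono[OF m1 m2]]) simp
      qed
      finally have NB0: "N \<le> 2 * (B\<^sup>2 * (gy t)\<^sup>2 + (gx t)\<^sup>2 * B\<^sup>2)" .
      have "2 * (B\<^sup>2 * (gy t)\<^sup>2 + (gx t)\<^sup>2 * B\<^sup>2) = 2 * B\<^sup>2 * ((gx t)\<^sup>2 + (gy t)\<^sup>2)"
        by (simp add: algebra_simps)
      with NB0 have NB: "N \<le> 2 * B\<^sup>2 * ((gx t)\<^sup>2 + (gy t)\<^sup>2)" by simp
      have St: "S t \<ge> s0" using tm(2)[OF t] by (simp add: s0_def)
      have p1: "s0 ^ 5 \<le> S t ^ 5" by (rule power_mono[OF St]) (use s0 in simp)
      have p2: "0 < S t ^ 5 * s0 ^ 5" using s0 Spos[OF t] by simp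
      have "N / (S t) ^ 5 \<le> N / s0 ^ 5" by (rule divide_left_mono[OF p1 N0 p2])
      also have "\<dots> \<le> 2 * B\<^sup>2 * ((gx t)\<^sup>2 + (gy t)\<^sup>2) / s0 ^ 5"
        by (rule divide_right_mono[OF NB]) (use s0 in simp)
      finally have h: "N / (S t) ^ 5 \<le> 2 * B\<^sup>2 * ((gx t)\<^sup>2 + (gy t)\<^sup>2) / s0 ^ 5" .
      have "\<epsilon>\<^sup>2 * (N / (S t) ^ 5) \<le> \<epsilon>\<^sup>2 * (2 * B\<^sup>2 * ((gx t)\<^sup>2 + (gy t)\<^sup>2) / s0 ^ 5)"
        by (rule mult_left_mono[OF h]) simp
      moreover have "\<epsilon>\<^sup>2 * (2 * B\<^sup>2 * ((gx t)\<^sup>2 + (gy t)\<^sup>2) / s0 ^ 5) = K * ((gx t)\<^sup>2 + (gy t)\<^sup>2)"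
        unfolding K_def by simp
      ultimately have a: "\<epsilon>\<^sup>2 * N / (S t) ^ 5 \<le> K * ((gx t)\<^sup>2 + (gy t)\<^sup>2)" by simp
      have "Th t * S t \<le> 1 * S t" by (rule mult_right_mono) (use Th[of t] Spos[OF t] in auto)
      also have "\<dots> \<le> BS" using BS t abs_ge_self[of "S t"] by (metis mult_1 order_trans)
      finally have b: "Th t * S t \<le> BS" .
      have c1: "0 \<le> \<epsilon>\<^sup>2 * N / (S t) ^ 5" using N0 Spos[OF t] by simp
      have c2: "0 \<le> Th t * S t" using Th[of t] Spos[OF t] \<alpha> by simp
      have ee: "e' t = \<epsilon>\<^sup>2 * N / (S t) ^ 5 + Th t * S t" unfolding e'_def N_def ..
      have "norm (e' t) = e' t" using c1 c2 ee by simp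
      also have "\<dots> \<le> Bd t" unfolding ee Bd_def using add_mono[OF a b] .
      finally show ?thesis .
    qed
    show ?thesis by (rule measurable_bounded_by_integrable_imp_absolutely_integrable[OF me' _ iBd bnd]) auto
  qed
  have en: "energy \<epsilon> \<alpha> psi x y = integral {0..1} e'"
  proof -
    have N: "negligible (Nx \<union> Ny)" using Nx Ny by simp
    have ie: "e absolutely_integrable_on {0..1}"
      by (rule absolutely_integrable_spike[OF ie' N]) (use ee' in auto)
    have "energy \<epsilon> \<alpha> psi x y = integral {0..1} e"
      unfolding energy_def e_def[symmetric] using set_lebesgue_integral_eq_integral(2)[OF ie] by simp
    also have "\<dots> = integral {0..1} e'"
      by (rule integral_spike[OF N]) (use ee' in auto)
    finally show ?thesis .
  qed
  define c where "c = V / L"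
  have lowb: "e' t \<ge> \<epsilon>\<^sup>2 * (2 * c * \<bar>\<omega> t\<bar> - c\<^sup>2 * S t) + \<alpha> * S t" if t: "t \<in> {0..1}" for t
  proof -
    have "(X t * gy t - gx t * Y t)\<^sup>2 / (S t) ^ 5 = (\<omega> t)\<^sup>2 / S t"
    proof -
      have Q: "(X t)\<^sup>2 + (Y t)\<^sup>2 = (S t)\<^sup>2" unfolding S_def by simp
      have "\<omega> t = (X t * gy t - gx t * Y t) / (S t)\<^sup>2"
        unfolding \<omega>_def omega_def Q using Spos[OF t] by (simp add: field_simps)
      then have N: "X t * gy t - gx t * Y t = \<omega> t * (S t)\<^sup>2" using Spos[OF t] by (simp add: field_simps)
      have "(\<omega> t * (S t)\<^sup>2)\<^sup>2 / (S t) ^ 5 = (\<omega> t)\<^sup>2 / S t"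
        using Spos[OF t] by (simp add: power_mult_distrib eval_nat_numeral field_simps)
      then show ?thesis unfolding N .
    qed
    then have "e' t = \<epsilon>\<^sup>2 * ((\<omega> t)\<^sup>2 / S t) + Th t * S t" unfolding e'_def by (metis times_divide_eq_right)
    moreover have "(\<omega> t)\<^sup>2 / S t \<ge> 2 * c * \<bar>\<omega> t\<bar> - c\<^sup>2 * S t" by (rule sq_div_bound[OF Spos[OF t]])
    moreover have "Th t * S t \<ge> \<alpha> * S t" using Th[of t] Spos[OF t] by (simp add: mult_right_mono)
    ultimately show ?thesis by (smt (verit) \<epsilon> mult_left_mono zero_le_power2)
  qed
  have "integral {0..1} e' \<ge> integral {0..1} (\<lambda>t. \<epsilon>\<^sup>2 * (2 * c * \<bar>\<omega> t\<bar> - c\<^sup>2 * S t) + \<alpha> * S t)"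
  proof (rule integral_le)
    show "e' integrable_on {0..1}" using ie' set_lebesgue_integral_eq_integral(1) by blast
    have "(\<lambda>t. \<epsilon>\<^sup>2 * (2 * c * \<bar>\<omega> t\<bar> - c\<^sup>2 * S t) + \<alpha> * S t) absolutely_integrable_on {0..1}"
      by (intro set_integral_add(1) set_integral_diff(1) set_integrable_mult_right iA iS)
    then show "(\<lambda>t. \<epsilon>\<^sup>2 * (2 * c * \<bar>\<omega> t\<bar> - c\<^sup>2 * S t) + \<alpha> * S t) integrable_on {0..1}"
      using set_lebesgue_integral_eq_integral(1) by blast
  qed (use lowb in auto)
  also have "integral {0..1} (\<lambda>t. \<epsilon>\<^sup>2 * (2 * c * \<bar>\<omega> t\<bar> - c\<^sup>2 * S t) + \<alpha> * S t)
      = \<epsilon>\<^sup>2 * (2 * c * V - c\<^sup>2 * L) + \<alpha> * L"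
  proof -
    have a1: "(\<lambda>t. \<bar>\<omega> t\<bar>) integrable_on {0..1}" using iA set_lebesgue_integral_eq_integral(1) by blast
    have a2: "S integrable_on {0..1}" using iS set_lebesgue_integral_eq_integral(1) by blast
    have b1: "(\<lambda>t. 2 * c * \<bar>\<omega> t\<bar>) integrable_on {0..1}" using integrable_cmul[OF a1, of "2 * c"] by simp
    have b2: "(\<lambda>t. c\<^sup>2 * S t) integrable_on {0..1}" using integrable_cmul[OF a2, of "c\<^sup>2"] by simp
    have b3: "(\<lambda>t. 2 * c * \<bar>\<omega> t\<bar> - c\<^sup>2 * S t) integrable_on {0..1}" using integrable_diff[OF b1 b2] .
    have b4: "(\<lambda>t. \<epsilon>\<^sup>2 * (2 * c * \<bar>\<omega> t\<bar> - c\<^sup>2 * S t)) integrable_on {0..1}" using integrable_cmul[OF b3, of "\<epsilon>\<^sup>2"] by simp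
    have b5: "(\<lambda>t. \<alpha> * S t) integrable_on {0..1}" using integrable_cmul[OF a2, of "\<alpha>"] by simp
    have "integral {0..1} (\<lambda>t. \<epsilon>\<^sup>2 * (2 * c * \<bar>\<omega> t\<bar> - c\<^sup>2 * S t) + \<alpha> * S t)
        = integral {0..1} (\<lambda>t. \<epsilon>\<^sup>2 * (2 * c * \<bar>\<omega> t\<bar> - c\<^sup>2 * S t)) + integral {0..1} (\<lambda>t. \<alpha> * S t)"
      by (rule integral_add[OF b4 b5])
    also have "integral {0..1} (\<lambda>t. \<epsilon>\<^sup>2 * (2 * c * \<bar>\<omega> t\<bar> - c\<^sup>2 * S t)) = \<epsilon>\<^sup>2 * integral {0..1} (\<lambda>t. 2 * c * \<bar>\<omega> t\<bar> - c\<^sup>2 * S t)"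
      by (rule integral_mult_right)
    also have "integral {0..1} (\<lambda>t. 2 * c * \<bar>\<omega> t\<bar> - c\<^sup>2 * S t) = integral {0..1} (\<lambda>t. 2 * c * \<bar>\<omega> t\<bar>) - integral {0..1} (\<lambda>t. c\<^sup>2 * S t)"
      by (rule integral_diff[OF b1 b2])
    also have "integral {0..1} (\<lambda>t. 2 * c * \<bar>\<omega> t\<bar>) = 2 * c * V" unfolding V_def by (rule integral_mult_right)
    also have "integral {0..1} (\<lambda>t. c\<^sup>2 * S t) = c\<^sup>2 * L" unfolding L_def by (rule integral_mult_right)
    also have "integral {0..1} (\<lambda>t. \<alpha> * S t) = \<alpha> * L" unfolding L_def by (rule integral_mult_right)
    finally show ?thesis .
  qed
  finally have Elow: "energy \<epsilon> \<alpha> psi x y \<ge> \<epsilon>\<^sup>2 * (2 * c * V - c\<^sup>2 * L) + \<alpha> * L" using en by simp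
  have "\<epsilon>\<^sup>2 * (2 * c * V - c\<^sup>2 * L) + \<alpha> * L = \<epsilon>\<^sup>2 * V\<^sup>2 / L + \<alpha> * L"
    using L1 unfolding c_def by (simp add: field_simps power2_eq_square)
  also have "\<epsilon>\<^sup>2 * V\<^sup>2 / L \<ge> (pi\<^sup>2 * \<epsilon>\<^sup>2) / L"
  proof -
    have "pi\<^sup>2 \<le> V\<^sup>2" using Vpi unfolding V_def by (intro power_mono) auto
    then show ?thesis using L1 \<epsilon> by (intro divide_right_mono) (auto simp: mult.commute)
  qed
  then have "\<epsilon>\<^sup>2 * V\<^sup>2 / L + \<alpha> * L \<ge> (pi\<^sup>2 * \<epsilon>\<^sup>2) / L + \<alpha> * L" by simp
  moreover have "(pi\<^sup>2 * \<epsilon>\<^sup>2) / L + \<alpha> * L > 1"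
    by (rule final_ineq) (use \<epsilon> L1 cond \<alpha> in \<open>auto simp: mult.commute\<close>)
  ultimately show ?thesis using Elow by linarith
qed

lemma energy_nonneg:
  assumes "\<alpha> > 0"
  shows "energy \<epsilon> \<alpha> psi u v \<ge> 0"
  unfolding energy_def set_lebesgue_integral_def
proof (intro Bochner_Integration.integral_nonneg_AE AE_I2)
  fix t :: real
  have s: "speed u v t \<ge> 0" by (simp add: speed_def)
  have th: "Theta psi \<alpha> (u t, v t) \<ge> 0" using assms by (simp add: Theta_def)
  have "0 \<le> \<epsilon>\<^sup>2 * (d1 u t * d2 v t - d2 u t * d1 v t)\<^sup>2 / speed u v t ^ 5 + Theta psi \<alpha> (u t, v t) * speed u v t"
    using s th by (intro add_nonneg_nonneg divide_nonneg_nonneg mult_nonneg_nonneg) auto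
  then show "0 \<le> indicator {0..1} t *\<^sub>R (\<epsilon>\<^sup>2 * (d1 u t * d2 v t - d2 u t * d1 v t)\<^sup>2 / speed u v t ^ 5 + Theta psi \<alpha> (u t, v t) * speed u v t)"
    by simp
qed

lemma flat_curve:
  fixes psi :: "real \<Rightarrow> real"
  assumes cpsi: "continuous_on UNIV psi"
  obtains x y where "admissible psi x y" "energy \<epsilon> \<alpha> psi x y = 1"
proof -
  obtain B where B: "\<forall>t\<in>{0..1}. \<bar>psi t\<bar> \<le> B"
    using cont_bound[OF continuous_on_subset[OF cpsi]] by blast
  define C where "C = B + 1"
  define x :: "real \<Rightarrow> real" where "x = (\<lambda>t. t)"
  define y :: "real \<Rightarrow> real" where "y = (\<lambda>t. C)"
  have d1x: "d1 x t = 1" if "t \<in> {0..1}" for t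
    unfolding d1_def x_def by (rule vd01[OF DERIV_ident that])
  have d1y: "d1 y t = 0" if "t \<in> {0..1}" for t
    unfolding d1_def y_def by (rule vd01[OF DERIV_const that])
  have d2x: "d2 x t = 0" if t: "t \<in> {0..1}" for t
  proof -
    have "(d1 x has_real_derivative 0) (at t within {0..1})"
      by (rule has_field_derivative_transform_within[OF DERIV_const[of 1] zero_less_one t]) (use d1x in auto)
    then show ?thesis unfolding d2_def d1_def[of "d1 x"] using vd01 t by blast
  qed
  have d2y: "d2 y t = 0" if t: "t \<in> {0..1}" for t
  proof -
    have "(d1 y has_real_derivative 0) (at t within {0..1})"
      by (rule has_field_derivative_transform_within[OF DERIV_const[of 0] zero_less_one t]) (use d1y in auto)
    then show ?thesis unfolding d2_def d1_def[of "d1 y"] using vd01 t by blast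
  qed
  have sp: "speed x y t = 1" if "t \<in> {0..1}" for t using that by (simp add: speed_def d1x d1y)
  have H2: "H2_01 (\<lambda>t. a * t + b)" for a b :: real
  proof -
    have 1: "continuous_on {0..1} (\<lambda>_. a)" by simp
    have 2: "\<forall>t\<in>{0..1}. ((\<lambda>t. a * t + b) has_vector_derivative (\<lambda>_. a) t) (at t within {0..1})"
    proof
      fix t :: real assume "t \<in> {0..1}"
      have "((\<lambda>t. a * t + b) has_real_derivative a * 1 + 0) (at t within {0..1})"
        by (intro DERIV_add DERIV_cmult DERIV_ident DERIV_const)
      then show "((\<lambda>t. a * t + b) has_vector_derivative (\<lambda>_. a) t) (at t within {0..1})"
        by (simp add: has_real_derivative_iff_has_vector_derivative)
    qed
    have 3: "set_integrable lborel {0..1} (\<lambda>_. 0::real)" by (simp add: set_integrable_def)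
    have 4: "set_integrable lborel {0..1} (\<lambda>t. ((\<lambda>_. 0::real) t)\<^sup>2)" by (simp add: set_integrable_def)
    have 5: "\<forall>t\<in>{0..1}. (\<lambda>_. a) t = (\<lambda>_. a) 0 + interval_lebesgue_integral lborel 0 (ereal t) (\<lambda>_. 0::real)" by simp
    show ?thesis unfolding H2_01_def
      apply (rule exI[of _ "\<lambda>_. a"], rule exI[of _ "\<lambda>_. 0::real"])
      using 1 2 3 4 5 by simp
  qed
  have H2x: "H2_01 x" using H2[of 1 0] by (simp add: x_def)
  have H2y: "H2_01 y" using H2[of 0 C] by (simp add: y_def)
  have above: "psi t < C" if "t \<in> {0..1}" for t using B that unfolding C_def by force
  have adm: "admissible psi x y"
    unfolding admissible_def using H2x H2y sp d1x d1y above
    by (auto simp: x_def y_def less_imp_le)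
  have pw: "\<epsilon>\<^sup>2 * (d1 x t * d2 y t - d2 x t * d1 y t)\<^sup>2 / speed x y t ^ 5 + Theta psi \<alpha> (x t, y t) * speed x y t = 1"
    if t: "t \<in> {0..1}" for t
  proof -
    have "Theta psi \<alpha> (x t, y t) = 1" using above[OF t] by (simp add: Theta_def x_def y_def)
    then show ?thesis using t by (simp add: d2x d2y sp)
  qed
  have fe: "(\<lambda>t. indicator {0..1} t *\<^sub>R (\<epsilon>\<^sup>2 * (d1 x t * d2 y t - d2 x t * d1 y t)\<^sup>2 / speed x y t ^ 5 + Theta psi \<alpha> (x t, y t) * speed x y t))
      = (\<lambda>t. indicator {0..1} t *\<^sub>R (1::real))"
  proof (rule ext)
    fix t :: real
    show "indicator {0..1} t *\<^sub>R (\<epsilon>\<^sup>2 * (d1 x t * d2 y t - d2 x t * d1 y t)\<^sup>2 / speed x y t ^ 5 + Theta psi \<alpha> (x t, y t) * speed x y t)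
      = indicator {0..1} t *\<^sub>R (1::real)"
      by (cases "t \<in> {0..1}") (simp add: pw, simp add: indicator_def)
  qed
  have "energy \<epsilon> \<alpha> psi x y = set_lebesgue_integral lebesgue {0..1} (\<lambda>t::real. 1::real)"
    unfolding energy_def set_lebesgue_integral_def fe
    by (simp only:)
  also have "\<dots> = integral {0..1} (\<lambda>t::real. 1::real)"
    by (rule set_lebesgue_integral_eq_integral(2)) (rule absolutely_integrable_on_const, simp)
  also have "\<dots> = 1" by simp
  finally show ?thesis using that adm by blast
qed

theorem theorem2:
  fixes psi :: "real \<Rightarrow> real" and \<epsilon> \<alpha> :: real
  assumes "continuous_on UNIV psi"
    and "\<And>s. psi (s + 1) = psi s"
    and "\<epsilon> > 0" and "0 < \<alpha>" and "\<alpha> < 1"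
    and "(pi\<^sup>2 * \<epsilon>\<^sup>2 + 1) * \<alpha> \<ge> 1"
  shows "\<forall>x y. minimizer \<epsilon> \<alpha> psi x y \<longrightarrow> graph_curve x y"
proof (intro allI impI)
  fix x y assume m: "minimizer \<epsilon> \<alpha> psi x y"
  then have adm: "admissible psi x y"
    and eq: "energy \<epsilon> \<alpha> psi x y = (INF c \<in> {(u, v). admissible psi u v}. energy \<epsilon> \<alpha> psi (fst c) (snd c))"
    unfolding minimizer_def by auto
  obtain x0 y0 where adm0: "admissible psi x0 y0" and e0: "energy \<epsilon> \<alpha> psi x0 y0 = 1"
    using flat_curve[OF assms(1)] by blast
  have bdd: "bdd_below ((\<lambda>c. energy \<epsilon> \<alpha> psi (fst c) (snd c)) ` {(u, v). admissible psi u v})"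
    by (rule bdd_belowI[where m=0]) (use energy_nonneg[OF assms(4)] in auto)
  have "(INF c \<in> {(u, v). admissible psi u v}. energy \<epsilon> \<alpha> psi (fst c) (snd c)) \<le> energy \<epsilon> \<alpha> psi (fst (x0, y0)) (snd (x0, y0))"
    by (rule cINF_lower[OF bdd]) (use adm0 in simp)
  then have le1: "energy \<epsilon> \<alpha> psi x y \<le> 1" using eq e0 by simp
  show "graph_curve x y"
  proof (rule ccontr)
    assume "\<not> graph_curve x y"
    from energy_gt1[OF assms(1) assms(3) assms(4) assms(5) assms(6) adm this] le1 show False by simp
  qed
qed

end
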